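(* Let $\mathbf W$ be a general channel with input alphabet $\mathcal X=\mathbb R$, general cost function $\mathbf c$ and $\Gamma\in\mathbb R$, satisfying assumptions (A1) and (A2) below. Then for all $\delta\ge0,\mu\ge0,\lambda\ge0$ with $\delta<1-\mu-\lambda$, $$D(\mu,\lambda,\Gamma|\mathbf W)\le S(\delta,\Gamma|\mathbf W).$$
   Context: A general channel $\mathbf W=\{W^n\}$ with input alphabet $\mathcal X$ and output alphabet $\mathcal Y$ is a sequence of transition probabilities: for each $n$ and $\mathbf x\in\mathcal X^n$, $W^n(\cdot|\mathbf x)$ is a probability measure on $\mathcal Y^n$, measurable in $\mathbf x$. A general cost function is a sequence of functions $c_n:\mathcal X^n\to\mathbb R$; put $\mathcal X^n(\Gamma)=\{\mathbf x:\frac1n c_n(\mathbf x)\le\Gamma\}$. $\mathcal S_\Gamma$ is the set of input processes $\mathbf X=\{X^n\}$ with $\Pr\{X^n\in\mathcal X^n(\Gamma)\}=1$ for all $n$; $Y^n$ denotes the output of $W^n$ for input $X^n$. For a distribution $Q$ on $\mathcal X^n$, $QW^n(B)=\int W^n(B|\mathbf x)Q(d\mathbf x)$. Identification codes: an $(n,N_n,\mu_n,\lambda_n,\Gamma)$ code consists of distributions $Q_1,\dots,Q_{N_n}$ on $\mathcal X^n$ with $Q_i(\mathcal X^n(\Gamma))=1$ and (not necessarily disjoint) sets $\mathcal D_1,\dots,\mathcal D_{N_n}\subset\mathcal Y^n$, with $\mu_n=\max_iQ_iW^n(\mathcal D_i^c)$, $\lambda_n=\max_{i\ne j}Q_jW^n(\mathcal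 D_i)$. $R$ is $(\mu,\lambda,\Gamma)$-achievable if such codes exist with $\limsup\mu_n\le\mu$, $\limsup\lambda_n\le\lambda$, $\liminf\frac1n\log\log N_n\ge R$; $D(\mu,\lambda,\Gamma|\mathbf W)$ is the supremum of such $R$. Resolvability: $d(P,P')=2\sup_B|P(B)-P'(B)|$; $U_M$ is uniform on $\{1,\dots,M\}$. For $\mathbf X\in\mathcal S_\Gamma$, $R$ is $(\delta,\Gamma)$-achievable for $\mathbf X$ if there are $M_n$ and maps $\varphi_n:\{1,\dots,M_n\}\to\mathcal X^n(\Gamma)$ such that, with $\tilde Y^n$ the output of $W^n$ for input $\varphi_n(U_{M_n})$, $\limsup d(P_{Y^n},P_{\tilde Y^n})\le\delta$ and $\limsup\frac1n\log M_n\le R$. $R$ is $(\delta,\Gamma)$-achievable if so for all $\mathbf X\in\mathcal S_\Gamma$; $S(\delta,\Gamma|\mathbf W)$ is the infimum of such $R$. (A1): there exist $n$-dimensional cubes $V_n(\Gamma)\subset\mathbb R^n$ of edge length $l_n(\Gamma)\ge2$ with $\limsup_n\frac1n\log\log l_n(\Gamma)=0$ and $\mathcal X^n(\Gamma)\subset V_n(\Gamma)$ for all $n$. (A2): letting $F_n(\mathbf x)=\left[\frac{\partial^2}{\partial v_i\partial v_j}D(W^n(\cdot|\mathbf v)\|W^n(\cdot|\mathbf x))\right]_{\mathbf v=\mathbf x}$ ($D$ the Kullback–Leibler divergence, twice differentiable in $\mathbf v$) and $\|F_n(\mathbf x)\|=\sup_{\mathbf v\ne\mathbf 0}\frac{\mathbf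 vF_n(\mathbf x)\mathbf v^T}{\mathbf v\mathbf v^T}$, one has $\limsup_n\frac1n\log\max\{1,\log\sup_{\mathbf x\in V_n(\Gamma)}\|F_n(\mathbf x)\|\}=0$. *)

theory Defs
  imports "HOL-Probability.Probability"
begin

definition Rn :: "nat \<Rightarrow> (nat \<Rightarrow> real) measure" where
  "Rn n = PiM {..<n} (\<lambda>_. lborel)"

definition enorm :: "nat \<Rightarrow> (nat \<Rightarrow> real) \<Rightarrow> real" where
  "enorm n v = sqrt (\<Sum>i<n. (v i)\<^sup>2)"

definition Yn :: "'y measure \<Rightarrow> nat \<Rightarrow> (nat \<Rightarrow> 'y) measure" where
  "Yn Y n = PiM {..<n} (\<lambda>_. Y)"

definition general_channel ::
  "'y measure \<Rightarrow> (nat \<Rightarrow> (nat \<Rightarrow> real) \<Rightarrow> (nat \<Rightarrow> 'y) measure) \<Rightarrow> bool" where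
  "general_channel Y W \<longleftrightarrow> (\<forall>n. W n \<in> Rn n \<rightarrow>\<^sub>M prob_algebra (Yn Y n))"

definition Xcost :: "(nat \<Rightarrow> (nat \<Rightarrow> real) \<Rightarrow> real) \<Rightarrow> real \<Rightarrow> nat \<Rightarrow> (nat \<Rightarrow> real) set" where
  "Xcost c \<Gamma> n = {x \<in> space (Rn n). c n x / real n \<le> \<Gamma>}"

definition QW :: "(nat \<Rightarrow> (nat \<Rightarrow> real) \<Rightarrow> (nat \<Rightarrow> 'y) measure) \<Rightarrow> nat
    \<Rightarrow> (nat \<Rightarrow> real) measure \<Rightarrow> (nat \<Rightarrow> 'y) set \<Rightarrow> real" where
  "QW W n Q B = (\<integral>x. measure (W n x) B \<partial>Q)"

definition idrate :: "(nat \<Rightarrow> nat) \<Rightarrow> nat \<Rightarrow> ereal" where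
  "idrate N n = (if N n \<le> 1 then -\<infinity> else ereal (ln (ln (real (N n))) / real n))"

text \<open>R is (mu,lambda,Gamma)-achievable: there are (n,N_n,mu_n,lambda_n,Gamma) codes
  (for every block length n \<ge> 1) with the required asymptotics. mu_n and lambda_n are
  upper bounds of the two error probabilities (equivalently the maxima).\<close>
definition id_achievable ::
  "'y measure \<Rightarrow> (nat \<Rightarrow> (nat \<Rightarrow> real) \<Rightarrow> (nat \<Rightarrow> 'y) measure) \<Rightarrow>
   (nat \<Rightarrow> (nat \<Rightarrow> real) \<Rightarrow> real) \<Rightarrow> real \<Rightarrow> real \<Rightarrow> real \<Rightarrow> real \<Rightarrow> bool" where
  "id_achievable Y W c \<mu> lm \<Gamma> R \<longleftrightarrow>
    (\<exists>(N :: nat \<Rightarrow> nat) (Q :: nat \<Rightarrow> nat \<Rightarrow> (nat \<Rightarrow> real) measure)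
       (Dec :: nat \<Rightarrow> nat \<Rightarrow> (nat \<Rightarrow> 'y) set) (mu :: nat \<Rightarrow> real) (lam :: nat \<Rightarrow> real).
      (\<forall>n\<ge>1. N n \<ge> 1 \<and>
         (\<forall>i\<in>{1..N n}. prob_space (Q n i) \<and> sets (Q n i) = sets (Rn n) \<and>
             Xcost c \<Gamma> n \<in> sets (Rn n) \<and> measure (Q n i) (Xcost c \<Gamma> n) = 1 \<and>
             Dec n i \<in> sets (Yn Y n) \<and>
             QW W n (Q n i) (space (Yn Y n) - Dec n i) \<le> mu n) \<and>
         (\<forall>i\<in>{1..N n}. \<forall>j\<in>{1..N n}. i \<noteq> j \<longrightarrow> QW W n (Q n j) (Dec n i) \<le> lam n)) \<and>
      limsup (\<lambda>n. ereal (mu n)) \<le> ereal \<mu> \<and>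
      limsup (\<lambda>n. ereal (lam n)) \<le> ereal lm \<and>
      liminf (idrate N) \<ge> ereal R)"

definition ID_capacity ::
  "'y measure \<Rightarrow> (nat \<Rightarrow> (nat \<Rightarrow> real) \<Rightarrow> (nat \<Rightarrow> 'y) measure) \<Rightarrow>
   (nat \<Rightarrow> (nat \<Rightarrow> real) \<Rightarrow> real) \<Rightarrow> real \<Rightarrow> real \<Rightarrow> real \<Rightarrow> ereal" where
  "ID_capacity Y W c \<mu> lm \<Gamma> = Sup {ereal R | R. id_achievable Y W c \<mu> lm \<Gamma> R}"

text \<open>Input processes in S_Gamma, given by the distributions of X^n.\<close>
definition input_processes ::
  "(nat \<Rightarrow> (nat \<Rightarrow> real) \<Rightarrow> real) \<Rightarrow> real \<Rightarrow> (nat \<Rightarrow> (nat \<Rightarrow> real) measure) set" where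
  "input_processes c \<Gamma> = {PX. \<forall>n\<ge>1. prob_space (PX n) \<and> sets (PX n) = sets (Rn n) \<and>
       Xcost c \<Gamma> n \<in> sets (Rn n) \<and> measure (PX n) (Xcost c \<Gamma> n) = 1}"

definition var_dist :: "'y measure \<Rightarrow> nat \<Rightarrow> (nat \<Rightarrow> 'y) measure \<Rightarrow> (nat \<Rightarrow> 'y) measure \<Rightarrow> real" where
  "var_dist Y n P P' = 2 * (SUP B \<in> sets (Yn Y n). \<bar>measure P B - measure P' B\<bar>)"

definition res_achievable_for ::
  "'y measure \<Rightarrow> (nat \<Rightarrow> (nat \<Rightarrow> real) \<Rightarrow> (nat \<Rightarrow> 'y) measure) \<Rightarrow>
   (nat \<Rightarrow> (nat \<Rightarrow> real) \<Rightarrow> real) \<Rightarrow> real \<Rightarrow> real \<Rightarrow> real \<Rightarrow>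
   (nat \<Rightarrow> (nat \<Rightarrow> real) measure) \<Rightarrow> bool" where
  "res_achievable_for Y W c \<delta> \<Gamma> R PX \<longleftrightarrow>
    (\<exists>(M :: nat \<Rightarrow> nat) (\<phi> :: nat \<Rightarrow> nat \<Rightarrow> (nat \<Rightarrow> real)).
      (\<forall>n\<ge>1. M n \<ge> 1 \<and> (\<forall>m\<in>{1..M n}. \<phi> n m \<in> Xcost c \<Gamma> n)) \<and>
      limsup (\<lambda>n. ereal (var_dist Y n (PX n \<bind> W n)
          (measure_pmf (pmf_of_set {1..M n}) \<bind> (\<lambda>m. W n (\<phi> n m))))) \<le> ereal \<delta> \<and>
      limsup (\<lambda>n. ereal (ln (real (M n)) / real n)) \<le> ereal R)"

definition Res_capacity ::
  "'y measure \<Rightarrow> (nat \<Rightarrow> (nat \<Rightarrow> real) \<Rightarrow> (nat \<Rightarrow> 'y) measure) \<Rightarrow>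
   (nat \<Rightarrow> (nat \<Rightarrow> real) \<Rightarrow> real) \<Rightarrow> real \<Rightarrow> real \<Rightarrow> ereal" where
  "Res_capacity Y W c \<delta> \<Gamma> =
     Inf {ereal R | R. \<forall>PX \<in> input_processes c \<Gamma>. res_achievable_for Y W c \<delta> \<Gamma> R PX}"

definition has_gradient_at :: "nat \<Rightarrow> ((nat \<Rightarrow> real) \<Rightarrow> real) \<Rightarrow> (nat \<Rightarrow> real) \<Rightarrow> (nat \<Rightarrow> real) \<Rightarrow> bool" where
  "has_gradient_at n g x G \<longleftrightarrow>
    (\<forall>e>0. \<exists>d>0. \<forall>v\<in>space (Rn n). enorm n (\<lambda>i. v i - x i) < d \<longrightarrow>
       \<bar>g v - g x - (\<Sum>i<n. G i * (v i - x i))\<bar> \<le> e * enorm n (\<lambda>i. v i - x i))"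

definition twice_differentiable_at :: "nat \<Rightarrow> ((nat \<Rightarrow> real) \<Rightarrow> real) \<Rightarrow> (nat \<Rightarrow> real) \<Rightarrow> bool" where
  "twice_differentiable_at n g x \<longleftrightarrow>
    (\<exists>G d. d > 0 \<and>
       (\<forall>v\<in>space (Rn n). enorm n (\<lambda>i. v i - x i) < d \<longrightarrow> has_gradient_at n g v (G v)) \<and>
       (\<forall>j<n. \<exists>H. has_gradient_at n (\<lambda>v. G v j) x H))"

definition partial :: "nat \<Rightarrow> ((nat \<Rightarrow> real) \<Rightarrow> real) \<Rightarrow> (nat \<Rightarrow> real) \<Rightarrow> real" where
  "partial j g v = deriv (\<lambda>t. g (v(j := v j + t))) 0"

text \<open>KL divergence D(W^n(.|v) || W^n(.|x)) (natural logarithm), and its finiteness.\<close>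
definition KLW :: "(nat \<Rightarrow> (nat \<Rightarrow> real) \<Rightarrow> (nat \<Rightarrow> 'y) measure) \<Rightarrow> nat \<Rightarrow>
    (nat \<Rightarrow> real) \<Rightarrow> (nat \<Rightarrow> real) \<Rightarrow> real" where
  "KLW W n x v = KL_divergence (exp 1) (W n x) (W n v)"

definition KLW_finite :: "(nat \<Rightarrow> (nat \<Rightarrow> real) \<Rightarrow> (nat \<Rightarrow> 'y) measure) \<Rightarrow> nat \<Rightarrow>
    (nat \<Rightarrow> real) \<Rightarrow> (nat \<Rightarrow> real) \<Rightarrow> bool" where
  "KLW_finite W n x v \<longleftrightarrow> absolutely_continuous (W n x) (W n v) \<and>
     integrable (W n v) (entropy_density (exp 1) (W n x) (W n v))"

definition Fmat :: "(nat \<Rightarrow> (nat \<Rightarrow> real) \<Rightarrow> (nat \<Rightarrow> 'y) measure) \<Rightarrow> nat \<Rightarrow>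
    (nat \<Rightarrow> real) \<Rightarrow> nat \<Rightarrow> nat \<Rightarrow> real" where
  "Fmat W n x i j = partial i (partial j (KLW W n x)) x"

definition quad_norm :: "nat \<Rightarrow> (nat \<Rightarrow> nat \<Rightarrow> real) \<Rightarrow> real" where
  "quad_norm n F = Sup {(\<Sum>i<n. \<Sum>j<n. v i * F i j * v j) / (\<Sum>i<n. (v i)\<^sup>2) | v.
                         v \<in> space (Rn n) \<and> (\<exists>i<n. v i \<noteq> 0)}"

definition cube :: "nat \<Rightarrow> (nat \<Rightarrow> real) \<Rightarrow> real \<Rightarrow> (nat \<Rightarrow> real) set" where
  "cube n a l = {x \<in> space (Rn n). \<forall>i<n. a i \<le> x i \<and> x i \<le> a i + l}"

text \<open>(1/n) log max{1, log s} with s in [-inf, inf]; log of a nonpositive number is -inf.\<close>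
definition A2_term :: "nat \<Rightarrow> ereal \<Rightarrow> ereal" where
  "A2_term n s = (if s = \<infinity> then \<infinity>
     else ereal (ln (max 1 (ln (max 1 (real_of_ereal s)))) / real n))"

text \<open>Assumptions (A1) and (A2) (sharing the same cubes V_n(Gamma)).\<close>
definition A1_A2 :: "(nat \<Rightarrow> (nat \<Rightarrow> real) \<Rightarrow> (nat \<Rightarrow> 'y) measure) \<Rightarrow>
    (nat \<Rightarrow> (nat \<Rightarrow> real) \<Rightarrow> real) \<Rightarrow> real \<Rightarrow> bool" where
  "A1_A2 W c \<Gamma> \<longleftrightarrow>
    (\<exists>(a :: nat \<Rightarrow> nat \<Rightarrow> real) (l :: nat \<Rightarrow> real).
       \<comment> \<open>(A1)\<close>
       (\<forall>n\<ge>1. l n \<ge> 2 \<and> Xcost c \<Gamma> n \<subseteq> cube n (a n) (l n)) \<and>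
       limsup (\<lambda>n. ereal (ln (ln (l n)) / real n)) = 0 \<and>
       \<comment> \<open>(A2): D twice differentiable in v at v = x, and the growth condition\<close>
       (\<forall>n\<ge>1. \<forall>x \<in> cube n (a n) (l n).
          (\<exists>d>0. \<forall>v\<in>space (Rn n). enorm n (\<lambda>i. v i - x i) < d \<longrightarrow> KLW_finite W n x v) \<and>
          twice_differentiable_at n (KLW W n x) x) \<and>
       limsup (\<lambda>n. A2_term n (SUP x \<in> cube n (a n) (l n). ereal (quad_norm n (Fmat W n x)))) = 0)"

end

theory Submission
  imports Defs "HOL-Real_Asymp.Real_Asymp"
begin

lemma h_le1:
  fixes D :: real assumes "0 < D" "D \<le> 1"
  shows "(D - 1)\<^sup>2 / 2 \<le> D * ln D - D + 1"
proof -
  let ?f = "\<lambda>t::real. t * ln t - t + 1 - (t - 1)\<^sup>2 / 2"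
  have "?f 1 \<le> ?f D"
  proof (rule DERIV_nonpos_imp_nonincreasing[OF assms(2)])
    fix x assume x: "D \<le> x" "x \<le> 1"
    then have xp: "0 < x" using assms by simp
    show "\<exists>y. DERIV ?f x :> y \<and> y \<le> 0"
    proof (intro exI conjI)
      show "DERIV ?f x :> ((1 * ln x + x * (1 / x)) - 1 + 0 - (2 * (x - 1) * 1) / 2)"
        using xp by (auto intro!: derivative_eq_intros)
      have "ln x \<le> x - 1" using ln_le_minus_one xp by simp
      then show "(1 * ln x + x * (1 / x)) - 1 + 0 - (2 * (x - 1) * 1) / 2 \<le> 0"
        using xp by simp
    qed
  qed
  then show ?thesis by simp
qed

lemma h_ge1:
  fixes D :: real assumes "1 \<le> D"
  shows "(D - 1)\<^sup>2 / (2 * D) \<le> D * ln D - D + 1"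
proof -
  let ?f = "\<lambda>t::real. t * ln t - t + 1 - (t - 1)\<^sup>2 / (2 * t)"
  have "?f 1 \<le> ?f D"
  proof (rule DERIV_nonneg_imp_nondecreasing[OF assms(1)])
    fix x assume x: "1 \<le> x" "x \<le> D"
    then have xp: "0 < x" by simp
    show "\<exists>y. DERIV ?f x :> y \<and> 0 \<le> y"
    proof (intro exI conjI)
      show "DERIV ?f x :> ((1 * ln x + x * (1 / x)) - 1 + 0 -
          ((2 * (x - 1) * 1) * (2 * x) - (x - 1)\<^sup>2 * 2) / (2 * x)\<^sup>2)"
        using xp by (auto intro!: derivative_eq_intros simp: power2_eq_square)
      have "ln (1/x) \<le> 1/x - 1" using ln_le_minus_one xp by simp
      then have l: "1 - 1/x \<le> ln x" using xp by (simp add: ln_div)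
      have e: "((2 * (x - 1) * 1) * (2 * x) - (x - 1)\<^sup>2 * 2) / (2 * x)\<^sup>2 = 1/2 - 1/(2*x^2)"
        using xp by (simp add: field_simps power2_eq_square) 
      have "0 \<le> (1 - 1/x)^2 / 2" by simp
      also have "(1 - 1/x)^2 / 2 = 1 - 1/x - 1/2 + 1/(2*x^2)"
        using xp by (simp add: field_simps power2_eq_square)
      finally show "0 \<le> (1 * ln x + x * (1 / x)) - 1 + 0 -
          ((2 * (x - 1) * 1) * (2 * x) - (x - 1)\<^sup>2 * 2) / (2 * x)\<^sup>2"
        using l xp e by simp
    qed
  qed
  then show ?thesis by simp
qed

lemma h_main:
  fixes D s :: real assumes "0 \<le> D" "0 < s"
  shows "\<bar>D - 1\<bar> \<le> s * (D * ln D - D + 1) + (D + 1) / (2 * s)"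
proof (cases "D = 0")
  case True
  have "0 \<le> (s - 1)^2 + s^2" by simp
  then have "1 \<le> s + 1 / (2 * s)" using assms by (simp add: field_simps power2_eq_square)
  then show ?thesis using True by simp
next
  case False
  then have Dp: "0 < D" using assms by simp
  define m where "m = max D 1"
  have mp: "0 < m" "m \<le> D + 1" unfolding m_def using Dp by auto
  have hb: "(D - 1)\<^sup>2 / (2 * m) \<le> D * ln D - D + 1"
  proof (cases "D \<le> 1")
    case True
    then have "m = 1" unfolding m_def by simp
    then show ?thesis using h_le1[OF Dp True] by simp
  next
    case False
    then have "m = D" unfolding m_def by simp
    then show ?thesis using h_ge1[of D] False by simp
  qed
  have amgm: "\<bar>D - 1\<bar> \<le> s * ((D - 1)\<^sup>2 / (2 * m)) + m / (2 * s)"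
  proof -
    have "0 \<le> (s * \<bar>D - 1\<bar> - m)^2 / (2 * s * m)" using mp assms by simp
    also have "(s * \<bar>D - 1\<bar> - m)^2 / (2 * s * m) = s * ((D - 1)\<^sup>2 / (2 * m)) + m / (2 * s) - \<bar>D - 1\<bar>"
      using mp assms by (simp add: field_simps power2_eq_square)
    finally show ?thesis by simp
  qed
  also have "\<dots> \<le> s * (D * ln D - D + 1) + (D + 1) / (2 * s)"
    using hb mp assms by (intro add_mono mult_left_mono divide_right_mono) auto
  finally show ?thesis .
qed

lemma le_2sqrt:
  fixes X K :: real
  assumes K: "0 \<le> K" and H: "\<And>s. 0 < s \<Longrightarrow> X \<le> s * K + 1 / s"
  shows "X \<le> 2 * sqrt K"
proof (cases "K = 0")
  case True
  show ?thesis
  proof (rule ccontr)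
    assume "\<not> ?thesis"
    then have Xp: "0 < X" using True by simp
    have "X \<le> 2 / X * K + 1 / (2 / X)" using H[of "2 / X"] Xp by simp
    also have "2 / X * K + 1 / (2 / X) = X / 2" using True by simp
    finally show False using Xp by simp
  qed
next
  case False
  then have Kp: "0 < K" using K by simp
  then have sp: "0 < sqrt K" by simp
  have sq: "sqrt K * sqrt K = K" using K by simp
  have "X \<le> (1 / sqrt K) * K + 1 / (1 / sqrt K)" using H[of "1 / sqrt K"] sp by simp
  also have "(1 / sqrt K) * K = sqrt K" using sp sq
    by (metis nonzero_mult_div_cancel_left less_irrefl times_divide_eq_left mult_1)
  also have "1 / (1 / sqrt K) = sqrt K" by simp
  finally show ?thesis by simp
qed

lemma h_nonneg:
  fixes D :: real assumes "0 \<le> D"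
  shows "0 \<le> D * ln D - D + 1"
proof (cases "D = 0")
  case True then show ?thesis by simp
next
  case False
  then have Dp: "0 < D" using assms by simp
  show ?thesis
  proof (cases "D \<le> 1")
    case True
    have "0 \<le> (D - 1)\<^sup>2 / 2" by simp
    also have "\<dots> \<le> D * ln D - D + 1" by (rule h_le1[OF Dp True])
    finally show ?thesis .
  next
    case False
    have "0 \<le> (D - 1)\<^sup>2 / (2 * D)" using Dp by simp
    also have "\<dots> \<le> D * ln D - D + 1" by (rule h_ge1) (use False in simp)
    finally show ?thesis .
  qed
qed

lemma tv_KL:
  fixes M N :: "'a measure"
  assumes pM: "prob_space M" and pN: "prob_space N" and ac: "absolutely_continuous M N"
    and sN: "sets N = sets M"
    and int: "integrable N (entropy_density (exp 1) M N)" and B: "B \<in> sets M"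
  shows "0 \<le> KL_divergence (exp 1) M N \<and>
         \<bar>measure N B - measure M B\<bar> \<le> 2 * sqrt (KL_divergence (exp 1) M N)"
proof -
  interpret M: prob_space M by fact
  interpret N: prob_space N by fact
  have "finite_measure N" by unfold_locales
  from M.real_RN_deriv[OF this ac sN] obtain D
    where D: "D \<in> borel_measurable M"
      "AE x in M. RN_deriv M N x = ennreal (D x)"
      "AE x in N. 0 < D x"
      "\<And>x. 0 \<le> D x"
    by this auto
  note Dm[measurable] = D(1)
  have "N = density M (RN_deriv M N)"
    using ac sN by (rule M.density_RN_deriv[symmetric])
  also have "\<dots> = density M D"
    using D by (auto intro!: density_cong)
  finally have N: "N = density M D" .
  from absolutely_continuous_AE[OF sN ac D(2)] D ac measurable_entropy_density
  have "integrable N (\<lambda>x. ln (D x))"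
    by (intro integrable_cong_AE[THEN iffD2, OF _ _ _ int])
       (auto simp: N entropy_density_def log_def)
  with D have intDl: "integrable M (\<lambda>x. D x * ln (D x))"
    by (subst integrable_real_density[symmetric]) (auto simp: N[symmetric] comp_def)
  have KL: "KL_divergence (exp 1) M N = (\<integral>x. D x * ln (D x) \<partial>M)"
    unfolding N using D by (subst M.KL_density) (auto simp: log_def)
  have intD: "integrable M D"
  proof -
    have "integrable N (\<lambda>x. 1::real)" by simp
    then have "integrable M (\<lambda>x. D x * 1)"
      by (subst integrable_real_density[symmetric]) (auto simp: N[symmetric] D)
    then show ?thesis by simp
  qed
  have intD1: "(\<integral>x. D x \<partial>M) = 1"
  proof -
    have "(\<integral>x. 1 \<partial>N) = (1::real)" by (simp add: N.prob_space)
    then have "(\<integral>x. D x *\<^sub>R 1 \<partial>M) = (1::real)"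
      by (subst (asm) N) (subst (asm) integral_density, auto simp: D)
    then show ?thesis by simp
  qed
  have NB: "measure N B = (\<integral>x. D x * indicator B x \<partial>M)"
  proof -
    have "measure N B = (\<integral>x. indicator B x \<partial>N)" using B sN by simp
    also have "\<dots> = (\<integral>x. D x *\<^sub>R indicator B x \<partial>M)"
      unfolding N using B D by (subst integral_density) auto
    finally show ?thesis by simp
  qed
  have MB: "measure M B = (\<integral>x. indicator B x \<partial>M)" using B by simp
  let ?h = "\<lambda>x. D x * ln (D x) - D x + 1"
  have inth: "integrable M ?h" using intDl intD by auto
  have Kh: "(\<integral>x. ?h x \<partial>M) = KL_divergence (exp 1) M N"
    using intDl intD intD1 KL by (simp add: Bochner_Integration.integral_diff Bochner_Integration.integral_add M.prob_space)
  have hnn: "0 \<le> ?h x" for x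
    using h_nonneg[OF D(4)[of x]] .
  have Knn: "0 \<le> KL_divergence (exp 1) M N"
  proof -
    have "0 \<le> (\<integral>x. ?h x \<partial>M)" by (rule integral_nonneg_AE) (simp add: hnn)
    then show ?thesis using Kh by simp
  qed
  have iDB: "integrable M (\<lambda>x. D x * indicator B x)"
    by (rule integrable_real_mult_indicator[OF B intD])
  have i1B: "integrable M (\<lambda>x. 1 * indicator B x :: real)"
    by (rule integrable_real_mult_indicator[OF B]) simp
  have diff: "measure N B - measure M B = (\<integral>x. (D x - 1) * indicator B x \<partial>M)"
  proof -
    have "(\<integral>x. (D x - 1) * indicator B x \<partial>M) = (\<integral>x. D x * indicator B x - 1 * indicator B x \<partial>M)"
      by (simp add: left_diff_distrib)
    also have "\<dots> = (\<integral>x. D x * indicator B x \<partial>M) - (\<integral>x. 1 * indicator B x \<partial>M)"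
      by (rule Bochner_Integration.integral_diff[OF iDB i1B])
    finally show ?thesis unfolding NB MB by simp
  qed
  have intD': "integrable M (\<lambda>x. D x - 1)" using intD by simp
  have intabs: "integrable M (\<lambda>x. \<bar>D x - 1\<bar>)" using intD' by (rule integrable_abs)
  have intabsB: "integrable M (\<lambda>x. \<bar>(D x - 1) * indicator B x\<bar>)"
    by (rule integrable_abs[OF integrable_real_mult_indicator[OF B intD']])
  have pw: "\<bar>(D x - 1) * indicator B x\<bar> \<le> \<bar>D x - 1\<bar>" for x
    by (simp split: split_indicator)
  have bound: "\<bar>measure N B - measure M B\<bar> \<le> s * KL_divergence (exp 1) M N + 1 / s"
    if s: "0 < s" for s
  proof -
    have i2: "integrable M (\<lambda>x. s * ?h x + (D x + 1) / (2 * s))"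
      using inth intD by simp
    have "\<bar>measure N B - measure M B\<bar> \<le> (\<integral>x. \<bar>(D x - 1) * indicator B x\<bar> \<partial>M)"
      unfolding diff by (rule integral_abs_bound)
    also have "\<dots> \<le> (\<integral>x. \<bar>D x - 1\<bar> \<partial>M)"
      by (rule integral_mono[OF intabsB intabs pw])
    also have "\<dots> \<le> (\<integral>x. s * ?h x + (D x + 1) / (2 * s) \<partial>M)"
      by (rule integral_mono[OF intabs i2 h_main[OF D(4) s]])
    also have "(\<integral>x. s * ?h x + (D x + 1) / (2 * s) \<partial>M)
        = s * (\<integral>x. ?h x \<partial>M) + ((\<integral>x. D x \<partial>M) + 1) / (2 * s)"
      using inth intD M.prob_space by simp
    also have "\<dots> = s * KL_divergence (exp 1) M N + 1 / s"
      using Kh intD1 s by simp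
    finally show ?thesis .
  qed
  show ?thesis using Knn le_2sqrt[OF Knn bound] by simp
qed

lemma space_Rn: "space (Rn n) = {x. \<forall>i. n \<le> i \<longrightarrow> x i = undefined}"
  unfolding Rn_def space_PiM PiE_def extensional_def Pi_def by auto

lemma restrict_Rn: "x \<in> space (Rn n) \<Longrightarrow> restrict x {..<n} = x"
  unfolding space_Rn by (auto simp: restrict_def fun_eq_iff)

definition seg :: "nat \<Rightarrow> (nat \<Rightarrow> real) \<Rightarrow> (nat \<Rightarrow> real) \<Rightarrow> real \<Rightarrow> (nat \<Rightarrow> real)" where
  "seg n y h t = restrict (\<lambda>i. y i + t * h i) {..<n}"

lemma seg_space: "seg n y h t \<in> space (Rn n)"
  unfolding space_Rn seg_def by auto

lemma seg_app: "i < n \<Longrightarrow> seg n y h t i = y i + t * h i"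
  unfolding seg_def by auto

lemma enorm_cong: "(\<And>i. i < n \<Longrightarrow> f i = g i) \<Longrightarrow> enorm n f = enorm n g"
  unfolding enorm_def by (intro arg_cong[where f=sqrt] sum.cong) auto

lemma enorm_nonneg: "0 \<le> enorm n f"
  unfolding enorm_def by (intro real_sqrt_ge_zero sum_nonneg) auto

lemma enorm_scale: "enorm n (\<lambda>i. t * h i) = \<bar>t\<bar> * enorm n h"
proof -
  have "(\<Sum>i<n. (t * h i)\<^sup>2) = t\<^sup>2 * (\<Sum>i<n. (h i)\<^sup>2)"
    by (simp add: sum_distrib_left power_mult_distrib)
  then show ?thesis unfolding enorm_def by (simp add: real_sqrt_mult)
qed

lemma enorm_seg: "enorm n (\<lambda>i. seg n y h t i - y i) = \<bar>t\<bar> * enorm n h"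
proof -
  have "enorm n (\<lambda>i. seg n y h t i - y i) = enorm n (\<lambda>i. t * h i)"
    by (rule enorm_cong) (simp add: seg_app)
  then show ?thesis by (simp add: enorm_scale)
qed

lemma seg_0: "y \<in> space (Rn n) \<Longrightarrow> seg n y h 0 = y"
  unfolding seg_def using restrict_Rn[of y n] by simp

lemma seg_seg: "seg n (seg n y h s) h t = seg n y h (t + s)"
  unfolding seg_def by (auto simp: restrict_def fun_eq_iff algebra_simps)

lemma seg_1: "v \<in> space (Rn n) \<Longrightarrow> seg n x (\<lambda>i. v i - x i) 1 = v"
  unfolding seg_def using restrict_Rn[of v n] by simp

lemma abs_comp_le_enorm: "j < n \<Longrightarrow> \<bar>h j\<bar> \<le> enorm n h"
proof -
  assume j: "j < n"
  have "(h j)\<^sup>2 \<le> (\<Sum>i<n. (h i)\<^sup>2)"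
    using j by (intro member_le_sum) auto
  then have "sqrt ((h j)\<^sup>2) \<le> enorm n h" unfolding enorm_def by (rule real_sqrt_le_mono)
  then show ?thesis by simp
qed

lemma enorm_sq: "(enorm n h)\<^sup>2 = (\<Sum>i<n. (h i)\<^sup>2)"
  unfolding enorm_def by (simp add: sum_nonneg)

lemma grad_line:
  assumes g: "has_gradient_at n g y Gy" and y: "y \<in> space (Rn n)"
  shows "((\<lambda>t. g (seg n y h t)) has_real_derivative (\<Sum>i<n. Gy i * h i)) (at 0)"
proof -
  let ?D = "\<Sum>i<n. Gy i * h i"
  have "((\<lambda>t. (g (seg n y h t) - g (seg n y h 0)) / (t - 0)) \<longlongrightarrow> ?D) (at 0)"
  proof (rule LIM_I)
    fix r :: real assume r: "0 < r"
    define e where "e = r / (2 * (enorm n h + 1))"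
    have hp: "0 \<le> enorm n h" by (rule enorm_nonneg)
    have e: "0 < e" unfolding e_def using r hp by simp
    obtain d where d: "d > 0" and dd: "\<And>v. v\<in>space (Rn n) \<Longrightarrow> enorm n (\<lambda>i. v i - y i) < d \<Longrightarrow>
       \<bar>g v - g y - (\<Sum>i<n. Gy i * (v i - y i))\<bar> \<le> e * enorm n (\<lambda>i. v i - y i)"
      using g e unfolding has_gradient_at_def by meson
    define s where "s = d / (enorm n h + 1)"
    have s: "0 < s" unfolding s_def using d hp by simp
    show "\<exists>s>0. \<forall>t. t \<noteq> 0 \<and> norm (t - 0) < s \<longrightarrow>
        norm ((g (seg n y h t) - g (seg n y h 0)) / (t - 0) - ?D) < r"
    proof (intro exI[of _ s] conjI allI impI s)
      fix t :: real assume t: "t \<noteq> 0 \<and> norm (t - 0) < s"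
      have tn: "\<bar>t\<bar> * enorm n h < d"
      proof -
        have "\<bar>t\<bar> * enorm n h \<le> \<bar>t\<bar> * (enorm n h + 1)" using t by simp
        also have "\<dots> < s * (enorm n h + 1)" using t hp by (intro mult_strict_right_mono) auto
        also have "\<dots> = d" unfolding s_def using hp by simp
        finally show ?thesis .
      qed
      have sum_eq: "(\<Sum>i<n. Gy i * (seg n y h t i - y i)) = t * ?D"
        by (simp add: seg_app sum_distrib_left algebra_simps)
      have b: "\<bar>g (seg n y h t) - g y - t * ?D\<bar> \<le> e * (\<bar>t\<bar> * enorm n h)"
        using dd[OF seg_space[of n y h t]] tn by (simp add: enorm_seg sum_eq)
      have "(g (seg n y h t) - g (seg n y h 0)) / (t - 0) - ?D = (g (seg n y h t) - g y - t * ?D) / t"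
        using t by (simp add: seg_0[OF y] field_simps)
      then have "norm ((g (seg n y h t) - g (seg n y h 0)) / (t - 0) - ?D)
          = \<bar>g (seg n y h t) - g y - t * ?D\<bar> / \<bar>t\<bar>" by (simp add: abs_divide)
      also have "\<dots> \<le> e * (\<bar>t\<bar> * enorm n h) / \<bar>t\<bar>" using b t by (intro divide_right_mono) auto
      also have "\<dots> = e * enorm n h" using t by simp
      also have "\<dots> < r"
      proof -
        have "e * enorm n h \<le> e * (enorm n h + 1)" using e by simp
        also have "\<dots> = r / 2" unfolding e_def using hp by (simp add: field_simps)
        finally show ?thesis using r by simp
      qed
      finally show "norm ((g (seg n y h t) - g (seg n y h 0)) / (t - 0) - ?D) < r" .
    qed
  qed
  then show ?thesis by (simp add: has_field_derivative_iff)
qed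

definition unitv :: "nat \<Rightarrow> nat \<Rightarrow> real" where "unitv j = (\<lambda>i. if i = j then 1 else 0)"

lemma sum_unitv: "j < n \<Longrightarrow> (\<Sum>i<n. G i * unitv j i) = G j"
  unfolding unitv_def by (simp add: if_distrib cong: if_cong)

lemma enorm_unitv: "j < n \<Longrightarrow> enorm n (unitv j) = 1"
proof -
  assume j: "j < n"
  have "(\<Sum>i<n. (unitv j i)\<^sup>2) = (\<Sum>i<n. if i = j then 1 else 0)"
    by (rule sum.cong) (auto simp: unitv_def)
  also have "\<dots> = 1" using j by simp
  finally show ?thesis unfolding enorm_def by simp
qed

lemma upd_seg: "v \<in> space (Rn n) \<Longrightarrow> j < n \<Longrightarrow> v(j := v j + t) = seg n v (unitv j) t"
  unfolding seg_def unitv_def space_Rn by (auto simp: fun_eq_iff)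

lemma partial_eq:
  assumes "has_gradient_at n g v Gv" "v \<in> space (Rn n)" "j < n"
  shows "partial j g v = Gv j"
proof -
  have "((\<lambda>t. g (seg n v (unitv j) t)) has_real_derivative Gv j) (at 0)"
    using grad_line[OF assms(1,2), of "unitv j"] sum_unitv[OF assms(3)] by simp
  moreover have "(\<lambda>t. g (v(j := v j + t))) = (\<lambda>t. g (seg n v (unitv j) t))"
    using upd_seg[OF assms(2,3)] by simp
  ultimately show ?thesis unfolding partial_def by (simp add: DERIV_imp_deriv)
qed

lemma grad_zero_min:
  assumes g: "has_gradient_at n g x Gx" and x: "x \<in> space (Rn n)" and j: "j < n"
    and d: "d > 0" and nn: "\<And>v. v \<in> space (Rn n) \<Longrightarrow> enorm n (\<lambda>i. v i - x i) < d \<Longrightarrow> g x \<le> g v"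
  shows "Gx j = 0"
proof -
  have D: "((\<lambda>t. g (seg n x (unitv j) t)) has_real_derivative Gx j) (at 0)"
    using grad_line[OF g x, of "unitv j"] sum_unitv[OF j] by simp
  show ?thesis
  proof (rule DERIV_local_min[OF D d], intro allI impI)
    fix t :: real assume "\<bar>0 - t\<bar> < d"
    then have "enorm n (\<lambda>i. seg n x (unitv j) t i - x i) < d"
      by (simp add: enorm_seg enorm_unitv[OF j])
    then have "g x \<le> g (seg n x (unitv j) t)" using nn[OF seg_space] by blast
    then show "g (seg n x (unitv j) 0) \<le> g (seg n x (unitv j) t)" by (simp add: seg_0[OF x])
  qed
qed

lemma second_partial:
  assumes x: "x \<in> space (Rn n)" and d: "d > 0"
    and G: "\<And>v. v \<in> space (Rn n) \<Longrightarrow> enorm n (\<lambda>i. v i - x i) < d \<Longrightarrow> has_gradient_at n g v (G v)"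
    and H: "has_gradient_at n (\<lambda>v. G v j) x Hj" and i: "i < n" and j: "j < n"
  shows "partial i (partial j g) x = Hj i"
proof -
  have D: "((\<lambda>t. G (seg n x (unitv i) t) j) has_real_derivative Hj i) (at 0)"
    using grad_line[OF H x, of "unitv i"] sum_unitv[OF i] by simp
  have ev: "eventually (\<lambda>t. partial j g (seg n x (unitv i) t) = G (seg n x (unitv i) t) j) (nhds 0)"
  proof -
    have "\<forall>t. dist t 0 < d \<longrightarrow> partial j g (seg n x (unitv i) t) = G (seg n x (unitv i) t) j"
    proof (intro allI impI)
      fix t :: real assume "dist t 0 < d"
      then have "enorm n (\<lambda>k. seg n x (unitv i) t k - x k) < d"
        by (simp add: enorm_seg enorm_unitv[OF i] dist_real_def)
      then show "partial j g (seg n x (unitv i) t) = G (seg n x (unitv i) t) j"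
        using partial_eq[OF G[OF seg_space] seg_space j] by blast
    qed
    then show ?thesis unfolding eventually_nhds_metric using d by blast
  qed
  have D2: "((\<lambda>t. partial j g (seg n x (unitv i) t)) has_real_derivative Hj i) (at 0)"
    using DERIV_cong_ev[OF refl ev refl] D by simp
  have "(\<lambda>t. partial j g (x(i := x i + t))) = (\<lambda>t. partial j g (seg n x (unitv i) t))"
    using upd_seg[OF x i] by simp
  then show ?thesis using D2 unfolding partial_def[of i] by (simp add: DERIV_imp_deriv)
qed

lemma uniform_delta:
  fixes n :: nat and f :: "'a \<Rightarrow> real"
  assumes "\<forall>j<n. \<exists>d>0. \<forall>v\<in>S. f v < d \<longrightarrow> Q j v"
  shows "\<exists>d>0. \<forall>j<n. \<forall>v\<in>S. f v < d \<longrightarrow> Q j v"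
  using assms
proof (induction n)
  case 0 then show ?case by (intro exI[of _ 1]) auto
next
  case (Suc n)
  then obtain d1 where d1: "d1 > 0" "\<forall>j<n. \<forall>v\<in>S. f v < d1 \<longrightarrow> Q j v" by auto
  obtain d2 where d2: "d2 > 0" "\<forall>v\<in>S. f v < d2 \<longrightarrow> Q n v" using Suc.prems by auto
  show ?case
  proof (intro exI[of _ "min d1 d2"] conjI allI impI ballI)
    show "0 < min d1 d2" using d1 d2 by simp
    fix j v assume "j < Suc n" "v \<in> S" "f v < min d1 d2"
    then show "Q j v" using d1 d2 by (cases "j = n") auto
  qed
qed

lemma quad_bound:
  fixes F :: "nat \<Rightarrow> nat \<Rightarrow> real"
  assumes v: "v \<in> space (Rn n)"
  shows "(\<Sum>i<n. \<Sum>j<n. v i * F i j * v j) \<le> max 0 (quad_norm n F) * (\<Sum>i<n. (v i)\<^sup>2)"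
proof (cases "\<exists>i<n. v i \<noteq> 0")
  case False
  then show ?thesis by simp
next
  case True
  define S where "S = (\<Sum>i<n. (v i)\<^sup>2)"
  obtain i0 where i0: "i0 < n" "v i0 \<noteq> 0" using True by blast
  have "(v i0)\<^sup>2 \<le> S" unfolding S_def using i0 by (intro member_le_sum) auto
  moreover have "0 < (v i0)\<^sup>2" using i0 by simp
  ultimately have Sp: "0 < S" by linarith
  define C where "C = (\<Sum>i<n. \<Sum>j<n. \<bar>F i j\<bar>)"
  have Cnn: "0 \<le> C" unfolding C_def by (intro sum_nonneg) auto
  have qb: "\<bar>\<Sum>i<n. \<Sum>j<n. w i * F i j * w j\<bar> \<le> C * (\<Sum>i<n. (w i)\<^sup>2)" for w
  proof -
    let ?S = "\<Sum>i<n. (w i)\<^sup>2"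
    have wi: "(w i)\<^sup>2 \<le> ?S" if "i < n" for i using that by (intro member_le_sum) auto
    have "\<bar>\<Sum>i<n. \<Sum>j<n. w i * F i j * w j\<bar> \<le> (\<Sum>i<n. \<Sum>j<n. \<bar>w i * F i j * w j\<bar>)"
      by (rule order_trans[OF sum_abs]) (intro sum_mono sum_abs)
    also have "\<dots> \<le> (\<Sum>i<n. \<Sum>j<n. \<bar>F i j\<bar> * ?S)"
    proof (intro sum_mono)
      fix i j assume i: "i \<in> {..<n}" and j: "j \<in> {..<n}"
      have "0 \<le> (\<bar>w i\<bar> - \<bar>w j\<bar>)\<^sup>2" by simp
      then have "0 \<le> (w i)\<^sup>2 + (w j)\<^sup>2 - 2 * \<bar>w i * w j\<bar>"
        by (simp only: power2_diff power2_abs abs_mult)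
      then have "\<bar>w i * w j\<bar> \<le> ((w i)\<^sup>2 + (w j)\<^sup>2) / 2" by simp
      also have "\<dots> \<le> ?S" using wi[of i] wi[of j] i j by simp
      finally have "\<bar>w i * w j\<bar> \<le> ?S" .
      then have "\<bar>F i j\<bar> * \<bar>w i * w j\<bar> \<le> \<bar>F i j\<bar> * ?S" by (rule mult_left_mono) simp
      then show "\<bar>w i * F i j * w j\<bar> \<le> \<bar>F i j\<bar> * ?S" by (simp add: abs_mult ac_simps)
    qed
    also have "\<dots> = C * ?S" unfolding C_def by (simp add: sum_distrib_right)
    finally show ?thesis .
  qed
  let ?A = "{(\<Sum>i<n. \<Sum>j<n. w i * F i j * w j) / (\<Sum>i<n. (w i)\<^sup>2) | w.
                         w \<in> space (Rn n) \<and> (\<exists>i<n. w i \<noteq> 0)}"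
  have bdd: "bdd_above ?A"
  proof (rule bdd_aboveI)
    fix y assume "y \<in> ?A"
    then obtain w where y: "y = (\<Sum>i<n. \<Sum>j<n. w i * F i j * w j) / (\<Sum>i<n. (w i)\<^sup>2)" by blast
    have "y \<le> \<bar>\<Sum>i<n. \<Sum>j<n. w i * F i j * w j\<bar> / (\<Sum>i<n. (w i)\<^sup>2)"
      unfolding y by (intro divide_right_mono) (auto intro: sum_nonneg)
    also have "\<dots> \<le> C"
      using qb[of w] Cnn by (cases "(\<Sum>i<n. (w i)\<^sup>2) = 0") (auto simp: divide_le_eq sum_nonneg
          order.strict_iff_order)
    finally show "y \<le> C" .
  qed
  have mem: "(\<Sum>i<n. \<Sum>j<n. v i * F i j * v j) / S \<in> ?A" unfolding S_def using v True by blast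
  have "(\<Sum>i<n. \<Sum>j<n. v i * F i j * v j) / S \<le> quad_norm n F"
    unfolding quad_norm_def using cSup_upper[OF mem bdd] .
  then have "(\<Sum>i<n. \<Sum>j<n. v i * F i j * v j) \<le> quad_norm n F * S"
    using Sp by (simp add: divide_le_eq)
  also have "\<dots> \<le> max 0 (quad_norm n F) * S" using Sp by (intro mult_right_mono) auto
  finally show ?thesis unfolding S_def .
qed

lemma taylor_upper:
  assumes x: "x \<in> space (Rn n)" and td: "twice_differentiable_at n g x" and g0: "g x = 0"
    and dn: "dn > 0" and nn: "\<And>v. v \<in> space (Rn n) \<Longrightarrow> enorm n (\<lambda>i. v i - x i) < dn \<Longrightarrow> 0 \<le> g v"
  shows "\<exists>d>0. \<forall>v\<in>space (Rn n). enorm n (\<lambda>i. v i - x i) < d \<longrightarrow>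
     g v \<le> (max 0 (quad_norm n (\<lambda>i j. partial i (partial j g) x)) + 1) * (enorm n (\<lambda>i. v i - x i))\<^sup>2"
proof -
  obtain G d0 where d0: "d0 > 0"
    and Gg: "\<And>v. v\<in>space (Rn n) \<Longrightarrow> enorm n (\<lambda>i. v i - x i) < d0 \<Longrightarrow> has_gradient_at n g v (G v)"
    and Hex: "\<forall>j<n. \<exists>H. has_gradient_at n (\<lambda>v. G v j) x H"
    using td unfolding twice_differentiable_at_def by blast
  have "\<forall>j. \<exists>H. j < n \<longrightarrow> has_gradient_at n (\<lambda>v. G v j) x H" using Hex by blast
  then obtain Hf where Hf: "\<And>j. j < n \<Longrightarrow> has_gradient_at n (\<lambda>v. G v j) x (Hf j)"
    by (metis choice)
  have enx: "enorm n (\<lambda>i. x i - x i) = 0" unfolding enorm_def by simp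
  have Gx: "has_gradient_at n g x (G x)" using Gg[OF x] enx d0 by simp
  have Gx0: "G x j = 0" if j: "j < n" for j
    by (rule grad_zero_min[OF Gx x j dn]) (use g0 nn in auto)
  have Fij: "partial i (partial j g) x = Hf j i" if "i < n" "j < n" for i j
    by (rule second_partial[OF x d0 Gg Hf]) (use that in auto)
  define Qb where "Qb = max 0 (quad_norm n (\<lambda>i j. partial i (partial j g) x))"
  define e :: real where "e = 1 / (real n + 1)"
  have e: "0 < e" unfolding e_def by simp
  have ne: "real n * e \<le> 1" unfolding e_def by (simp add: field_simps)
  have "\<forall>j<n. \<exists>d>0. \<forall>v\<in>space (Rn n). enorm n (\<lambda>i. v i - x i) < d \<longrightarrow>
      \<bar>G v j - G x j - (\<Sum>i<n. Hf j i * (v i - x i))\<bar> \<le> e * enorm n (\<lambda>i. v i - x i)"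
    using Hf e unfolding has_gradient_at_def by blast
  from uniform_delta[OF this] obtain d1 where d1: "d1 > 0"
    and d1b: "\<And>j v. j < n \<Longrightarrow> v\<in>space (Rn n) \<Longrightarrow> enorm n (\<lambda>i. v i - x i) < d1 \<Longrightarrow>
      \<bar>G v j - G x j - (\<Sum>i<n. Hf j i * (v i - x i))\<bar> \<le> e * enorm n (\<lambda>i. v i - x i)"
    by blast
  show ?thesis
  proof (intro exI[of _ "min d0 d1"] conjI ballI impI)
    show "0 < min d0 d1" using d0 d1 by simp
    fix v assume v: "v \<in> space (Rn n)" and vd: "enorm n (\<lambda>i. v i - x i) < min d0 d1"
    define h where "h = (\<lambda>i. v i - x i)"
    define r where "r = enorm n h"
    have r0: "0 \<le> r" unfolding r_def by (rule enorm_nonneg)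
    have rd: "r < d0" "r < d1" using vd unfolding r_def h_def by auto
    define \<phi> where "\<phi> = (\<lambda>s. g (seg n x h s))"
    define \<phi>' where "\<phi>' = (\<lambda>s. \<Sum>j<n. G (seg n x h s) j * h j)"
    have der: "(\<phi> has_real_derivative \<phi>' s) (at s)" if s: "0 \<le> s" "s \<le> 1" for s
    proof -
      let ?y = "seg n x h s"
      have "enorm n (\<lambda>i. ?y i - x i) = \<bar>s\<bar> * r" unfolding r_def by (rule enorm_seg)
      also have "\<dots> \<le> r" using s r0 mult_left_le_one_le[of r s] by simp
      finally have "enorm n (\<lambda>i. ?y i - x i) < d0" using rd by simp
      then have gy: "has_gradient_at n g ?y (G ?y)" using Gg[OF seg_space] by blast
      have "((\<lambda>t. g (seg n ?y h t)) has_real_derivative \<phi>' s) (at 0)"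
        unfolding \<phi>'_def using grad_line[OF gy seg_space] .
      then have "((\<lambda>t. \<phi> (t + s)) has_real_derivative \<phi>' s) (at 0)"
        unfolding \<phi>_def seg_seg .
      then show ?thesis using DERIV_shift[of \<phi> "\<phi>' s" 0 s] by simp
    qed
    obtain \<xi> where \<xi>: "0 < \<xi>" "\<xi> < 1" and mvt: "\<phi> 1 - \<phi> 0 = (1 - 0) * \<phi>' \<xi>"
      using MVT2[of 0 1 \<phi> \<phi>'] der by auto
    have "\<phi> 1 = g v" unfolding \<phi>_def h_def using seg_1[OF v] by simp
    moreover have "\<phi> 0 = 0" unfolding \<phi>_def using seg_0[OF x] g0 by simp
    ultimately have gv: "g v = \<phi>' \<xi>" using mvt by simp
    let ?y = "seg n x h \<xi>"
    have eny: "enorm n (\<lambda>i. ?y i - x i) = \<xi> * r" unfolding r_def using enorm_seg \<xi> by simp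
    have eny2: "\<xi> * r \<le> r" using \<xi> r0 mult_left_le_one_le[of r \<xi>] by simp
    define rj where "rj = (\<lambda>j. G ?y j - \<xi> * (\<Sum>i<n. Hf j i * h i))"
    have rjb: "\<bar>rj j\<bar> \<le> e * r" if j: "j < n" for j
    proof -
      have "enorm n (\<lambda>i. ?y i - x i) < d1" using eny eny2 rd by simp
      then have "\<bar>G ?y j - G x j - (\<Sum>i<n. Hf j i * (?y i - x i))\<bar> \<le> e * enorm n (\<lambda>i. ?y i - x i)"
        using d1b[OF j seg_space] by blast
      moreover have "(\<Sum>i<n. Hf j i * (?y i - x i)) = \<xi> * (\<Sum>i<n. Hf j i * h i)"
        by (simp add: seg_app sum_distrib_left algebra_simps)
      ultimately have "\<bar>rj j\<bar> \<le> e * (\<xi> * r)" unfolding rj_def using Gx0[OF j] eny by simp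
      also have "\<dots> \<le> e * r" using eny2 e by (intro mult_left_mono) auto
      finally show ?thesis .
    qed
    define q where "q = (\<Sum>i<n. \<Sum>j<n. h i * partial i (partial j g) x * h j)"
    have split: "\<phi>' \<xi> = \<xi> * q + (\<Sum>j<n. rj j * h j)"
    proof -
      have "\<phi>' \<xi> = (\<Sum>j<n. (\<xi> * (\<Sum>i<n. Hf j i * h i) + rj j) * h j)"
        unfolding \<phi>'_def rj_def by simp
      also have "\<dots> = (\<Sum>j<n. \<xi> * (\<Sum>i<n. Hf j i * h i) * h j) + (\<Sum>j<n. rj j * h j)"
        by (simp add: distrib_right sum.distrib)
      also have "(\<Sum>j<n. \<xi> * (\<Sum>i<n. Hf j i * h i) * h j) = \<xi> * (\<Sum>j<n. \<Sum>i<n. h i * Hf j i * h j)"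
        by (simp add: sum_distrib_left sum_distrib_right ac_simps)
      also have "(\<Sum>j<n. \<Sum>i<n. h i * Hf j i * h j) = (\<Sum>i<n. \<Sum>j<n. h i * Hf j i * h j)"
        by (rule sum.swap)
      also have "\<dots> = q" unfolding q_def by (intro sum.cong refl) (simp add: Fij)
      finally show ?thesis .
    qed
    have hs: "restrict h {..<n} \<in> space (Rn n)" unfolding space_Rn by auto
    have "q = (\<Sum>i<n. \<Sum>j<n. restrict h {..<n} i * partial i (partial j g) x * restrict h {..<n} j)"
      unfolding q_def by (intro sum.cong refl) auto
    also have "\<dots> \<le> Qb * (\<Sum>i<n. (restrict h {..<n} i)\<^sup>2)"
      unfolding Qb_def by (rule quad_bound[OF hs])
    also have "(\<Sum>i<n. (restrict h {..<n} i)\<^sup>2) = r\<^sup>2"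
      unfolding r_def enorm_sq by (intro sum.cong refl) auto
    finally have qb: "q \<le> Qb * r\<^sup>2" .
    have Qb0: "0 \<le> Qb" unfolding Qb_def by simp
    have t1: "\<xi> * q \<le> Qb * r\<^sup>2"
    proof (cases "q \<le> 0")
      case True
      then have "\<xi> * q \<le> 0" using \<xi> by (simp add: mult_nonneg_nonpos)
      also have "0 \<le> Qb * r\<^sup>2" using Qb0 by simp
      finally show ?thesis .
    next
      case False
      then have "\<xi> * q \<le> q" using \<xi> mult_left_le_one_le[of q \<xi>] by simp
      then show ?thesis using qb by simp
    qed
    have t2: "(\<Sum>j<n. rj j * h j) \<le> r\<^sup>2"
    proof -
      have "(\<Sum>j<n. rj j * h j) \<le> (\<Sum>j<n. \<bar>rj j * h j\<bar>)" by (intro sum_mono) simp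
      also have "\<dots> \<le> (\<Sum>j<n. (e * r) * r)"
      proof (intro sum_mono)
        fix j assume j: "j \<in> {..<n}"
        have "\<bar>rj j\<bar> * \<bar>h j\<bar> \<le> (e * r) * r"
          using rjb[of j] abs_comp_le_enorm[of j n h] j e r0 unfolding r_def
          by (intro mult_mono) auto
        then show "\<bar>rj j * h j\<bar> \<le> (e * r) * r" by (simp add: abs_mult)
      qed
      also have "\<dots> = (real n * e) * r\<^sup>2" by (simp add: power2_eq_square)
      also have "\<dots> \<le> 1 * r\<^sup>2" using ne by (intro mult_right_mono) auto
      finally show ?thesis by simp
    qed
    have "g v \<le> Qb * r\<^sup>2 + r\<^sup>2" using gv split t1 t2 by simp
    then show "g v \<le> (max 0 (quad_norm n (\<lambda>i j. partial i (partial j g) x)) + 1) * (enorm n (\<lambda>i. v i - x i))\<^sup>2"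
      unfolding Qb_def[symmetric] r_def h_def[symmetric] by (simp add: distrib_right)
  qed
qed

lemma W_prob:
  assumes gc: "general_channel Y W" and x: "x \<in> space (Rn n)"
  shows "prob_space (W n x)" "sets (W n x) = sets (Yn Y n)"
proof -
  have "W n \<in> Rn n \<rightarrow>\<^sub>M prob_algebra (Yn Y n)" using gc unfolding general_channel_def by blast
  then have "W n x \<in> space (prob_algebra (Yn Y n))" using x by (rule measurable_space)
  then show "prob_space (W n x)" "sets (W n x) = sets (Yn Y n)" by (auto simp: space_prob_algebra)
qed

lemma local_lip:
  assumes gc: "general_channel Y W" and y: "y \<in> space (Rn n)"
    and fin: "\<exists>d>0. \<forall>v\<in>space (Rn n). enorm n (\<lambda>i. v i - y i) < d \<longrightarrow> KLW_finite W n y v"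
    and td: "twice_differentiable_at n (KLW W n y) y"
    and Qy: "quad_norm n (Fmat W n y) \<le> Bq" and Bq: "0 \<le> Bq"
    and B: "B \<in> sets (Yn Y n)"
  shows "\<exists>d>0. \<forall>v\<in>space (Rn n). enorm n (\<lambda>i. v i - y i) < d \<longrightarrow>
     \<bar>measure (W n v) B - measure (W n y) B\<bar> \<le> 2 * sqrt (Bq + 1) * enorm n (\<lambda>i. v i - y i)"
proof -
  obtain d1 where d1: "d1 > 0" and fd: "\<And>v. v\<in>space (Rn n) \<Longrightarrow> enorm n (\<lambda>i. v i - y i) < d1 \<Longrightarrow> KLW_finite W n y v"
    using fin by blast
  have tv: "0 \<le> KLW W n y v \<and> \<bar>measure (W n v) B - measure (W n y) B\<bar> \<le> 2 * sqrt (KLW W n y v)"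
    if v: "v\<in>space (Rn n)" "enorm n (\<lambda>i. v i - y i) < d1" for v
  proof -
    have f: "KLW_finite W n y v" using fd[OF v] .
    show ?thesis unfolding KLW_def
      by (rule tv_KL) (use f W_prob[OF gc y] W_prob[OF gc v(1)] B in \<open>auto simp: KLW_finite_def\<close>)
  qed
  have g0: "KLW W n y y = 0"
  proof -
    interpret prob_space "W n y" using W_prob[OF gc y] by simp
    show ?thesis unfolding KLW_def by (rule KL_same_eq_0)
  qed
  obtain d2 where d2: "d2 > 0" and tb: "\<And>v. v\<in>space (Rn n) \<Longrightarrow> enorm n (\<lambda>i. v i - y i) < d2 \<Longrightarrow>
     KLW W n y v \<le> (max 0 (quad_norm n (\<lambda>i j. partial i (partial j (KLW W n y)) y)) + 1) * (enorm n (\<lambda>i. v i - y i))\<^sup>2"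
    using taylor_upper[OF y td g0 d1] tv by blast
  show ?thesis
  proof (intro exI[of _ "min d1 d2"] conjI ballI impI)
    show "0 < min d1 d2" using d1 d2 by simp
    fix v assume v: "v \<in> space (Rn n)" and vd: "enorm n (\<lambda>i. v i - y i) < min d1 d2"
    let ?r = "enorm n (\<lambda>i. v i - y i)"
    have "KLW W n y v \<le> (max 0 (quad_norm n (Fmat W n y)) + 1) * ?r\<^sup>2"
      using tb[OF v] vd unfolding Fmat_def by simp
    also have "\<dots> \<le> (Bq + 1) * ?r\<^sup>2" using Qy Bq by (intro mult_right_mono) auto
    finally have k: "KLW W n y v \<le> (Bq + 1) * ?r\<^sup>2" .
    have "\<bar>measure (W n v) B - measure (W n y) B\<bar> \<le> 2 * sqrt (KLW W n y v)"
      using tv[OF v] vd by simp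
    also have "\<dots> \<le> 2 * sqrt ((Bq + 1) * ?r\<^sup>2)" using k by simp
    also have "sqrt ((Bq + 1) * ?r\<^sup>2) = sqrt (Bq + 1) * ?r"
      using enorm_nonneg[of n] by (simp add: real_sqrt_mult)
    finally show "\<bar>measure (W n v) B - measure (W n y) B\<bar> \<le> 2 * sqrt (Bq + 1) * ?r" by simp
  qed
qed

lemma lip_glob:
  fixes \<phi> :: "real \<Rightarrow> real"
  assumes L: "0 \<le> L"
    and loc: "\<And>s. s \<in> {0..1} \<Longrightarrow> \<exists>d>0. \<forall>t\<in>{0..1}. \<bar>t - s\<bar> < d \<longrightarrow> \<bar>\<phi> t - \<phi> s\<bar> \<le> L * \<bar>t - s\<bar>"
  shows "\<bar>\<phi> 1 - \<phi> 0\<bar> \<le> L"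
proof -
  define A where "A = {s\<in>{0..1}. \<bar>\<phi> s - \<phi> 0\<bar> \<le> L * s}"
  have A0: "0 \<in> A" unfolding A_def by simp
  have Ane: "A \<noteq> {}" using A0 by blast
  have bdd: "bdd_above A" unfolding A_def by (rule bdd_aboveI[of _ 1]) auto
  define \<sigma> where "\<sigma> = Sup A"
  have s0: "0 \<le> \<sigma>" unfolding \<sigma>_def using cSup_upper[OF A0 bdd] .
  have s1: "\<sigma> \<le> 1" unfolding \<sigma>_def by (rule cSup_least[OF Ane]) (auto simp: A_def)
  obtain d where d: "d > 0" and dd: "\<And>t. t\<in>{0..1} \<Longrightarrow> \<bar>t - \<sigma>\<bar> < d \<Longrightarrow> \<bar>\<phi> t - \<phi> \<sigma>\<bar> \<le> L * \<bar>t - \<sigma>\<bar>"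
    using loc[of \<sigma>] s0 s1 by auto
  have sA: "\<sigma> \<in> A"
  proof -
    have "\<sigma> - d < \<sigma>" using d by simp
    then obtain s where s: "s \<in> A" "\<sigma> - d < s" unfolding \<sigma>_def using less_cSup_iff[OF Ane bdd] by blast
    have ss: "s \<le> \<sigma>" unfolding \<sigma>_def using cSup_upper[OF s(1) bdd] .
    have s01: "s \<in> {0..1}" and sb: "\<bar>\<phi> s - \<phi> 0\<bar> \<le> L * s" using s(1) unfolding A_def by auto
    have "\<bar>\<phi> s - \<phi> \<sigma>\<bar> \<le> L * \<bar>s - \<sigma>\<bar>" using dd[OF s01] s ss by simp
    then have "\<bar>\<phi> \<sigma> - \<phi> 0\<bar> \<le> L * (\<sigma> - s) + L * s" using sb ss by simp
    then show ?thesis unfolding A_def using s0 s1 by (simp add: algebra_simps)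
  qed
  have "\<sigma> = 1"
  proof (rule ccontr)
    assume "\<sigma> \<noteq> 1"
    then have sl: "\<sigma> < 1" using s1 by simp
    define t where "t = min 1 (\<sigma> + d / 2)"
    have t01: "t \<in> {0..1}" unfolding t_def using s0 sl d by auto
    have tgt: "\<sigma> < t" unfolding t_def using sl d by simp
    have td: "\<bar>t - \<sigma>\<bar> < d" unfolding t_def using sl d by auto
    have "\<bar>\<phi> t - \<phi> \<sigma>\<bar> \<le> L * \<bar>t - \<sigma>\<bar>" using dd[OF t01 td] .
    moreover have "\<bar>\<phi> \<sigma> - \<phi> 0\<bar> \<le> L * \<sigma>" using sA unfolding A_def by simp
    ultimately have "\<bar>\<phi> t - \<phi> 0\<bar> \<le> L * (t - \<sigma>) + L * \<sigma>" using tgt by simp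
    then have "t \<in> A" unfolding A_def using t01 by (simp add: algebra_simps)
    then have "t \<le> \<sigma>" unfolding \<sigma>_def using cSup_upper[OF _ bdd] by blast
    then show False using tgt by simp
  qed
  then show ?thesis using sA unfolding A_def by simp
qed

lemma seg_cube:
  assumes x: "x \<in> cube n a l" and v: "v \<in> cube n a l" and s: "0 \<le> s" "s \<le> 1"
  shows "seg n x (\<lambda>i. v i - x i) s \<in> cube n a l"
proof -
  have "a i \<le> x i + s * (v i - x i) \<and> x i + s * (v i - x i) \<le> a i + l" if i: "i < n" for i
  proof -
    have xi: "a i \<le> x i" "x i \<le> a i + l" and vi: "a i \<le> v i" "v i \<le> a i + l"
      using x v i unfolding cube_def by auto
    have e: "x i + s * (v i - x i) = (1 - s) * x i + s * v i" by (simp add: algebra_simps)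
    have "(1 - s) * a i + s * a i \<le> (1 - s) * x i + s * v i"
      using xi vi s by (intro add_mono mult_left_mono) auto
    moreover have "(1 - s) * x i + s * v i \<le> (1 - s) * (a i + l) + s * (a i + l)"
      using xi vi s by (intro add_mono mult_left_mono) auto
    ultimately show ?thesis unfolding e by (simp add: algebra_simps)
  qed
  then show ?thesis unfolding cube_def using seg_space by (auto simp: seg_app)
qed

lemma cube_lip:
  fixes \<mu> :: "(nat \<Rightarrow> real) \<Rightarrow> real"
  assumes L: "0 \<le> L"
    and loc: "\<And>y. y \<in> cube n a l \<Longrightarrow> \<exists>d>0. \<forall>v\<in>space (Rn n). enorm n (\<lambda>i. v i - y i) < d \<longrightarrow>
        \<bar>\<mu> v - \<mu> y\<bar> \<le> L * enorm n (\<lambda>i. v i - y i)"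
    and x: "x \<in> cube n a l" and v: "v \<in> cube n a l"
  shows "\<bar>\<mu> v - \<mu> x\<bar> \<le> L * enorm n (\<lambda>i. v i - x i)"
proof -
  define h where "h = (\<lambda>i. v i - x i)"
  define \<phi> where "\<phi> = (\<lambda>s. \<mu> (seg n x h s))"
  have xs: "x \<in> space (Rn n)" "v \<in> space (Rn n)" using x v unfolding cube_def by auto
  have hn: "0 \<le> enorm n h" by (rule enorm_nonneg)
  have "\<bar>\<phi> 1 - \<phi> 0\<bar> \<le> L * enorm n h"
  proof (rule lip_glob)
    show "0 \<le> L * enorm n h" using L hn by simp
    fix s :: real assume s: "s \<in> {0..1}"
    let ?y = "seg n x h s"
    have yc: "?y \<in> cube n a l" unfolding h_def using seg_cube[OF x v] s by auto
    obtain d where d: "d > 0" and dd: "\<And>w. w\<in>space (Rn n) \<Longrightarrow> enorm n (\<lambda>i. w i - ?y i) < d \<Longrightarrow>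
        \<bar>\<mu> w - \<mu> ?y\<bar> \<le> L * enorm n (\<lambda>i. w i - ?y i)" using loc[OF yc] by blast
    show "\<exists>d>0. \<forall>t\<in>{0..1}. \<bar>t - s\<bar> < d \<longrightarrow> \<bar>\<phi> t - \<phi> s\<bar> \<le> L * enorm n h * \<bar>t - s\<bar>"
    proof (intro exI[of _ "d / (enorm n h + 1)"] conjI ballI impI)
      show "0 < d / (enorm n h + 1)" using d hn by simp
      fix t assume t: "t \<in> {0..1}" "\<bar>t - s\<bar> < d / (enorm n h + 1)"
      have st: "seg n x h t = seg n ?y h (t - s)" by (simp add: seg_seg)
      have en: "enorm n (\<lambda>i. seg n ?y h (t - s) i - ?y i) = \<bar>t - s\<bar> * enorm n h" by (rule enorm_seg)
      have "\<bar>t - s\<bar> * enorm n h \<le> \<bar>t - s\<bar> * (enorm n h + 1)" by (simp add: mult_left_mono)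
      also have "\<dots> < d" using t(2) hn by (simp add: pos_less_divide_eq)
      finally have "enorm n (\<lambda>i. seg n ?y h (t - s) i - ?y i) < d" using en by simp
      then have "\<bar>\<mu> (seg n ?y h (t - s)) - \<mu> ?y\<bar> \<le> L * (\<bar>t - s\<bar> * enorm n h)"
        using dd[OF seg_space[of n ?y h "t - s"]] en by simp
      then show "\<bar>\<phi> t - \<phi> s\<bar> \<le> L * enorm n h * \<bar>t - s\<bar>" unfolding \<phi>_def st by (simp add: ac_simps)
    qed
  qed
  moreover have "\<phi> 1 = \<mu> v" unfolding \<phi>_def h_def using seg_1[OF xs(2)] by simp
  moreover have "\<phi> 0 = \<mu> x" unfolding \<phi>_def using seg_0[OF xs(1)] by simp
  ultimately show ?thesis unfolding h_def by simp
qed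

lemma bindW:
  assumes gc: "general_channel Y W" and pQ: "prob_space Q" and sQ: "sets Q = sets (Rn n)"
  shows "prob_space (Q \<bind> W n)" "sets (Q \<bind> W n) = sets (Yn Y n)"
    "space (Q \<bind> W n) = space (Yn Y n)"
    "\<And>B. B \<in> sets (Yn Y n) \<Longrightarrow> measure (Q \<bind> W n) B = QW W n Q B"
proof -
  have Wm: "W n \<in> Rn n \<rightarrow>\<^sub>M prob_algebra (Yn Y n)" using gc unfolding general_channel_def by blast
  have Qs: "Q \<in> space (prob_algebra (Rn n))" using pQ sQ by (simp add: space_prob_algebra)
  show p: "prob_space (Q \<bind> W n)" by (rule prob_space_bind'[OF Qs Wm])
  show s: "sets (Q \<bind> W n) = sets (Yn Y n)" by (rule sets_bind'[OF Qs Wm])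
  then show "space (Q \<bind> W n) = space (Yn Y n)" by (rule sets_eq_imp_space_eq)
  have Wm': "W n \<in> Q \<rightarrow>\<^sub>M subprob_algebra (Yn Y n)"
    using measurable_prob_algebraD[OF Wm] by (simp add: measurable_cong_sets[OF sQ refl])
  interpret prob_space Q by fact
  fix B assume B: "B \<in> sets (Yn Y n)"
  show "measure (Q \<bind> W n) B = QW W n Q B"
    unfolding QW_def by (rule subprob_space.measure_bind[OF subprob_space_axioms Wm' B])
qed

lemma pmf_bind_cases:
  fixes f :: "nat \<Rightarrow> 'b measure"
  assumes S: "finite S" "S \<noteq> {}" and fK: "\<And>m. m \<in> S \<Longrightarrow> f m \<in> space (prob_algebra K)"
  shows "(\<forall>B\<in>sets K. measure (measure_pmf (pmf_of_set S) \<bind> f) B = (\<Sum>m\<in>S. measure (f m) B) / card S)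
       \<or> (\<forall>B. measure (measure_pmf (pmf_of_set S) \<bind> f) B = 0)"
proof -
  let ?p = "measure_pmf (pmf_of_set S)"
  define s0 where "s0 = (SOME x. x \<in> space ?p)"
  have bnd: "?p \<bind> g = join (distr ?p (subprob_algebra (g s0)) g)" for g :: "nat \<Rightarrow> 'b measure"
    unfolding s0_def by (rule bind_nonempty) simp
  have setp: "set_pmf (pmf_of_set S) = S" using S by simp
  have em: "emeasure ?p X = emeasure ?p (X \<inter> S)" for X
    using emeasure_Int_set_pmf[of "pmf_of_set S" X] setp by simp
  obtain m1 where m1: "m1 \<in> S" using S by blast
  have fsets: "sets (f m) = sets K" if "m \<in> S" for m using fK[OF that] by (simp add: space_prob_algebra)
  show ?thesis
  proof (cases "sets (f s0) = sets K")
    case True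
    define f' where "f' = (\<lambda>m. if m \<in> S then f m else f m1)"
    have f'K: "f' m \<in> space (prob_algebra K)" for m unfolding f'_def using fK m1 by auto
    have f'm: "f' \<in> ?p \<rightarrow>\<^sub>M prob_algebra K" using f'K by simp
    have f's: "sets (f' s0) = sets K" using f'K[of s0] by (simp add: space_prob_algebra)
    have SA: "subprob_algebra (f s0) = subprob_algebra (f' s0)"
      using True f's by (intro subprob_algebra_cong) simp
    have dd: "distr ?p (subprob_algebra (f s0)) f = distr ?p (subprob_algebra (f' s0)) f'"
    proof -
      have "(\<lambda>A. emeasure ?p (f -` A \<inter> space ?p)) = (\<lambda>A. emeasure ?p (f' -` A \<inter> space ?p))"
      proof
        fix A
        have "f -` A \<inter> S = f' -` A \<inter> S" unfolding f'_def by auto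
        then show "emeasure ?p (f -` A \<inter> space ?p) = emeasure ?p (f' -` A \<inter> space ?p)"
          using em[of "f -` A"] em[of "f' -` A"] by simp
      qed
      then show ?thesis unfolding distr_def SA by simp
    qed
    have beq: "?p \<bind> f = ?p \<bind> f'" unfolding bnd dd ..
    have "measure (?p \<bind> f) B = (\<Sum>m\<in>S. measure (f m) B) / card S" if B: "B \<in> sets K" for B
    proof -
      have "measure (?p \<bind> f') B = measure_pmf.expectation (pmf_of_set S) (\<lambda>m. measure (f' m) B)"
        by (rule measure_pmf.measure_bind[OF measurable_prob_algebraD[OF f'm] B])
      also have "\<dots> = (\<Sum>m\<in>S. measure (f' m) B) / card S" using S by (simp add: integral_pmf_of_set)
      also have "(\<Sum>m\<in>S. measure (f' m) B) = (\<Sum>m\<in>S. measure (f m) B)"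
        unfolding f'_def by (intro sum.cong) auto
      finally show ?thesis using beq by simp
    qed
    then show ?thesis by blast
  next
    case False
    let ?SA = "subprob_algebra (f s0)"
    let ?D = "distr ?p ?SA f"
    have D0: "emeasure ?D X = 0" for X
    proof -
      have "emeasure ?p (f -` X \<inter> space ?p) = 0" if X: "X \<in> sigma_sets (space ?SA) (sets ?SA)"
      proof -
        have "X \<subseteq> space ?SA" using X by (metis sets.sigma_sets_eq sets.sets_into_space)
        then have "f -` X \<inter> S = {}" using fsets False by (auto simp: space_subprob_algebra)
        then show ?thesis using em[of "f -` X"] by simp
      qed
      then show ?thesis unfolding distr_def by (simp add: emeasure_measure_of_conv)
    qed
    have Dnull: "?D = null_measure ?D"
      by (rule measure_eqI) (simp_all add: D0)
    have I0: "(\<integral>\<^sup>+ M'. emeasure M' B \<partial>?D) = 0" for B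
      by (subst Dnull) simp
    have "emeasure (?p \<bind> f) B = 0" for B
      unfolding bnd join_def by (simp add: emeasure_measure_of_conv I0)
    then show ?thesis by (simp add: measure_def)
  qed
qed

lemma count_core:
  fixes n N Mmax :: nat and L \<eta> \<kappa> mu lam l :: real and P :: "nat \<Rightarrow> (nat \<Rightarrow> 'y) set \<Rightarrow> real"
  assumes L: "L \<ge> 0" and \<eta>: "\<eta> > 0" and l: "l \<ge> 0"
   and lip: "\<And>B x v. B \<in> sets (Yn Y n) \<Longrightarrow> x \<in> cube n a l \<Longrightarrow> v \<in> cube n a l \<Longrightarrow>
        \<bar>measure (W n v) B - measure (W n x) B\<bar> \<le> L * enorm n (\<lambda>i. v i - x i)"
   and Dc: "\<And>i. i\<in>{1..N} \<Longrightarrow> Dc i \<in> sets (Yn Y n)"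
   and c1: "\<And>i. i\<in>{1..N} \<Longrightarrow> P i (Dc i) \<ge> 1 - mu"
   and c2: "\<And>i j. i\<in>{1..N} \<Longrightarrow> j\<in>{1..N} \<Longrightarrow> i \<noteq> j \<Longrightarrow> P j (Dc i) \<le> lam"
   and approx: "\<And>i. i\<in>{1..N} \<Longrightarrow> \<exists>M \<phi>. 1 \<le> M \<and> M \<le> Mmax \<and> (\<forall>m\<in>{1..M}. \<phi> m \<in> cube n a l) \<and>
        (\<forall>B\<in>sets (Yn Y n). \<bar>P i B - (\<Sum>m\<in>{1..M}. measure (W n (\<phi> m)) B) / M\<bar> \<le> \<kappa>)"
   and sep: "2 * \<kappa> + 2 * (L * sqrt n * \<eta>) < 1 - mu - lam"
  shows "N \<le> Mmax * (nat \<lfloor>l / \<eta>\<rfloor> + 1) ^ (n * Mmax)"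
proof -
  define K where "K = nat \<lfloor>l / \<eta>\<rfloor>"
  define qz where "qz = (\<lambda>x::nat\<Rightarrow>real. restrict (\<lambda>i. a i + \<eta> * real (nat \<lfloor>(x i - a i) / \<eta>\<rfloor>)) {..<n})"
  define G where "G = (\<lambda>k. restrict (\<lambda>i. a i + \<eta> * real (k i)) {..<n}) ` (PiE {..<n} (\<lambda>_. {0..K}))"
  have qzi: "a i \<le> qz x i \<and> qz x i \<le> x i \<and> x i - qz x i < \<eta> \<and> nat \<lfloor>(x i - a i) / \<eta>\<rfloor> \<le> K"
    if x: "x \<in> cube n a l" and i: "i < n" for x i
  proof -
    have xi: "a i \<le> x i" "x i \<le> a i + l" using x i unfolding cube_def by auto
    define t where "t = (x i - a i) / \<eta>"
    have t0: "0 \<le> t" unfolding t_def using xi \<eta> by simp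
    have tl: "t \<le> l / \<eta>" unfolding t_def using xi \<eta> by (simp add: divide_right_mono)
    have f0: "0 \<le> \<lfloor>t\<rfloor>" using t0 by simp
    have fl: "real (nat \<lfloor>t\<rfloor>) = of_int \<lfloor>t\<rfloor>" using f0 by simp
    have q: "qz x i = a i + \<eta> * of_int \<lfloor>t\<rfloor>" unfolding qz_def t_def using i fl t_def by simp
    have "of_int \<lfloor>t\<rfloor> \<le> t" "t < of_int \<lfloor>t\<rfloor> + 1" by linarith+
    then have "\<eta> * of_int \<lfloor>t\<rfloor> \<le> \<eta> * t" "\<eta> * t < \<eta> * (of_int \<lfloor>t\<rfloor> + 1)" using \<eta> by simp_all
    moreover have "\<eta> * t = x i - a i" unfolding t_def using \<eta> by simp
    moreover have "0 \<le> \<eta> * of_int \<lfloor>t\<rfloor>" using \<eta> f0 by simp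
    moreover have "nat \<lfloor>t\<rfloor> \<le> K" unfolding K_def using tl by (simp add: floor_mono nat_mono)
    ultimately show ?thesis unfolding q using t_def by (simp add: algebra_simps)
  qed
  have qz_cube: "qz x \<in> cube n a l" if x: "x \<in> cube n a l" for x
  proof -
    have "qz x \<in> space (Rn n)" unfolding qz_def space_Rn by auto
    moreover have "\<forall>i<n. a i \<le> qz x i \<and> qz x i \<le> a i + l"
    proof (intro allI impI)
      fix i assume i: "i < n"
      have "x i \<le> a i + l" using x i unfolding cube_def by auto
      then show "a i \<le> qz x i \<and> qz x i \<le> a i + l" using qzi[OF x i] by linarith
    qed
    ultimately show ?thesis unfolding cube_def by auto
  qed
  have qz_G: "qz x \<in> G" if x: "x \<in> cube n a l" for x
  proof -
    let ?k = "restrict (\<lambda>i. nat \<lfloor>(x i - a i) / \<eta>\<rfloor>) {..<n}"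
    have "?k \<in> PiE {..<n} (\<lambda>_. {0..K})" using qzi[OF x] by auto
    moreover have "qz x = restrict (\<lambda>i. a i + \<eta> * real (?k i)) {..<n}"
      unfolding qz_def by (auto simp: restrict_def fun_eq_iff)
    ultimately show ?thesis unfolding G_def by blast
  qed
  have finG: "finite G" unfolding G_def by (intro finite_imageI finite_PiE) auto
  have cardG: "card G \<le> (K + 1) ^ n"
  proof -
    have "card G \<le> card (PiE {..<n} (\<lambda>_. {0..K}))" unfolding G_def
      by (rule card_image_le) (intro finite_PiE, auto)
    also have "\<dots> = (K + 1) ^ n" by (simp add: card_PiE)
    finally show ?thesis .
  qed
  have qz_near: "enorm n (\<lambda>i. x i - qz x i) \<le> sqrt n * \<eta>" if x: "x \<in> cube n a l" for x
  proof -
    have "(\<Sum>i<n. (x i - qz x i)\<^sup>2) \<le> (\<Sum>i<n. \<eta>\<^sup>2)"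
    proof (intro sum_mono)
      fix i assume "i \<in> {..<n}"
      then have "0 \<le> x i - qz x i" "x i - qz x i \<le> \<eta>" using qzi[OF x, of i] by auto
      then show "(x i - qz x i)\<^sup>2 \<le> \<eta>\<^sup>2" by (intro power_mono) auto
    qed
    then have "enorm n (\<lambda>i. x i - qz x i) \<le> sqrt (n * \<eta>\<^sup>2)" unfolding enorm_def
      by (intro real_sqrt_le_mono) simp
    also have "\<dots> = sqrt n * \<eta>" using \<eta> by (simp add: real_sqrt_mult)
    finally show ?thesis .
  qed
  have "\<forall>i\<in>{1..N}. \<exists>p. 1 \<le> fst p \<and> fst p \<le> Mmax \<and> (\<forall>m\<in>{1..fst p}. snd p m \<in> cube n a l) \<and>
        (\<forall>B\<in>sets (Yn Y n). \<bar>P i B - (\<Sum>m\<in>{1..fst p}. measure (W n (snd p m)) B) / fst p\<bar> \<le> \<kappa>)"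
  proof
    fix i assume i: "i \<in> {1..N}"
    from approx[OF i] obtain M \<phi> where "1 \<le> M \<and> M \<le> Mmax \<and> (\<forall>m\<in>{1..M}. \<phi> m \<in> cube n a l) \<and>
        (\<forall>B\<in>sets (Yn Y n). \<bar>P i B - (\<Sum>m\<in>{1..M}. measure (W n (\<phi> m)) B) / M\<bar> \<le> \<kappa>)" by blast
    then show "\<exists>p. 1 \<le> fst p \<and> fst p \<le> Mmax \<and> (\<forall>m\<in>{1..fst p}. snd p m \<in> cube n a l) \<and>
        (\<forall>B\<in>sets (Yn Y n). \<bar>P i B - (\<Sum>m\<in>{1..fst p}. measure (W n (snd p m)) B) / fst p\<bar> \<le> \<kappa>)"
      by (intro exI[of _ "(M, \<phi>)"]) simp
  qed
  from bchoice[OF this] obtain pf where pf: "\<And>i. i\<in>{1..N} \<Longrightarrow> 1 \<le> fst (pf i) \<and> fst (pf i) \<le> Mmax \<and>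
        (\<forall>m\<in>{1..fst (pf i)}. snd (pf i) m \<in> cube n a l) \<and>
        (\<forall>B\<in>sets (Yn Y n). \<bar>P i B - (\<Sum>m\<in>{1..fst (pf i)}. measure (W n (snd (pf i) m)) B) / fst (pf i)\<bar> \<le> \<kappa>)"
    by blast
  define Mf where "Mf i = fst (pf i)" for i
  define \<phi>f where "\<phi>f i = snd (pf i)" for i
  define code where "code i = (Mf i, restrict (\<lambda>m. qz (\<phi>f i (min m (Mf i)))) {1..Mmax})" for i
  have sub: "code ` {1..N} \<subseteq> {1..Mmax} \<times> PiE {1..Mmax} (\<lambda>_. G)"
  proof
    fix c assume "c \<in> code ` {1..N}"
    then obtain i where i: "i \<in> {1..N}" and c: "c = code i" by blast
    have M: "1 \<le> Mf i" "Mf i \<le> Mmax" using pf[OF i] unfolding Mf_def by auto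
    have "qz (\<phi>f i (min m (Mf i))) \<in> G" if "m \<in> {1..Mmax}" for m
    proof -
      have "min m (Mf i) \<in> {1..Mf i}" using that M by auto
      then have "\<phi>f i (min m (Mf i)) \<in> cube n a l" using pf[OF i] unfolding Mf_def \<phi>f_def by blast
      then show ?thesis by (rule qz_G)
    qed
    then show "c \<in> {1..Mmax} \<times> PiE {1..Mmax} (\<lambda>_. G)" unfolding c code_def using M by auto
  qed
  have inj: "inj_on code {1..N}"
  proof (rule inj_onI, rule ccontr)
    fix i j assume i: "i \<in> {1..N}" and j: "j \<in> {1..N}" and eq: "code i = code j" and ne: "i \<noteq> j"
    have Meq: "Mf i = Mf j" using eq unfolding code_def by simp
    define M where "M = Mf i"
    have M: "1 \<le> M" "M \<le> Mmax" using pf[OF i] unfolding M_def Mf_def by auto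
    have qeq: "qz (\<phi>f i m) = qz (\<phi>f j m)" if m: "m \<in> {1..M}" for m
    proof -
      have "restrict (\<lambda>m. qz (\<phi>f i (min m (Mf i)))) {1..Mmax} = restrict (\<lambda>m. qz (\<phi>f j (min m (Mf j)))) {1..Mmax}"
        using eq unfolding code_def prod.inject by (rule conjunct2)
      from fun_cong[OF this, of m]
      have "qz (\<phi>f i (min m (Mf i))) = qz (\<phi>f j (min m (Mf j)))" using m M by simp
      moreover have "min m (Mf i) = m" "min m (Mf j) = m" using m Meq unfolding M_def by auto
      ultimately show ?thesis by simp
    qed
    have ci: "\<phi>f i m \<in> cube n a l" and cj: "\<phi>f j m \<in> cube n a l" if "m \<in> {1..M}" for m
      using pf[OF i] pf[OF j] that Meq unfolding M_def Mf_def \<phi>f_def by auto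
    define B where "B = Dc i"
    have B: "B \<in> sets (Yn Y n)" unfolding B_def using Dc[OF i] .
    define ai where "ai = (\<Sum>m\<in>{1..M}. measure (W n (\<phi>f i m)) B) / M"
    define aj where "aj = (\<Sum>m\<in>{1..M}. measure (W n (\<phi>f j m)) B) / M"
    have ai: "\<bar>P i B - ai\<bar> \<le> \<kappa>" using pf[OF i] B unfolding ai_def M_def Mf_def \<phi>f_def by blast
    have aj: "\<bar>P j B - aj\<bar> \<le> \<kappa>" using pf[OF j] B Meq unfolding aj_def M_def Mf_def \<phi>f_def by auto
    have each: "\<bar>measure (W n (\<phi>f i m)) B - measure (W n (\<phi>f j m)) B\<bar> \<le> 2 * (L * sqrt n * \<eta>)"
      if m: "m \<in> {1..M}" for m
    proof -
      let ?q = "qz (\<phi>f i m)"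
      have qc: "?q \<in> cube n a l" by (rule qz_cube[OF ci[OF m]])
      have e1: "\<bar>measure (W n (\<phi>f i m)) B - measure (W n ?q) B\<bar> \<le> L * (sqrt n * \<eta>)"
        by (rule order_trans[OF lip[OF B qc ci[OF m]] mult_left_mono[OF qz_near[OF ci[OF m]] L]])
      have e2': "\<bar>measure (W n (\<phi>f j m)) B - measure (W n (qz (\<phi>f j m))) B\<bar> \<le> L * (sqrt n * \<eta>)"
        by (rule order_trans[OF lip[OF B qz_cube[OF cj[OF m]] cj[OF m]] mult_left_mono[OF qz_near[OF cj[OF m]] L]])
      have e2: "\<bar>measure (W n (\<phi>f j m)) B - measure (W n ?q) B\<bar> \<le> L * (sqrt n * \<eta>)"
        using e2' qeq[OF m] by simp
      show ?thesis using e1 e2 by simp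
    qed
    have "\<bar>ai - aj\<bar> = \<bar>\<Sum>m\<in>{1..M}. measure (W n (\<phi>f i m)) B - measure (W n (\<phi>f j m)) B\<bar> / M"
      unfolding ai_def aj_def by (simp add: sum_subtractf diff_divide_distrib[symmetric] abs_divide)
    also have "\<dots> \<le> (\<Sum>m\<in>{1..M}. \<bar>measure (W n (\<phi>f i m)) B - measure (W n (\<phi>f j m)) B\<bar>) / M"
      by (intro divide_right_mono sum_abs) simp
    also have "\<dots> \<le> (\<Sum>m\<in>{1..M}. 2 * (L * sqrt n * \<eta>)) / M"
      by (intro divide_right_mono sum_mono each) auto
    also have "\<dots> = 2 * (L * sqrt n * \<eta>)" using M by simp
    finally have aij: "\<bar>ai - aj\<bar> \<le> 2 * (L * sqrt n * \<eta>)" .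
    have "1 - mu \<le> P i B" using c1[OF i] unfolding B_def .
    moreover have "P j B \<le> lam" using c2[OF i j ne] unfolding B_def .
    ultimately show False using ai aj aij sep by linarith
  qed
  have "N = card {1..N}" by simp
  also have "\<dots> \<le> card ({1..Mmax} \<times> PiE {1..Mmax} (\<lambda>_. G))"
    by (rule card_inj_on_le[OF inj sub]) (intro finite_cartesian_product finite_PiE finG, auto)
  also have "\<dots> = Mmax * card G ^ Mmax" by (simp add: card_cartesian_product card_PiE)
  also have "\<dots> \<le> Mmax * ((K + 1) ^ n) ^ Mmax" by (intro mult_left_mono power_mono cardG) auto
  also have "\<dots> = Mmax * (K + 1) ^ (n * Mmax)" by (simp add: power_mult)
  finally show ?thesis unfolding K_def .
qed

lemma lnln_bound:
  fixes N Mmax Kp n :: nat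
  assumes N: "2 \<le> N" and Nb: "N \<le> Mmax * Kp ^ (n * Mmax)" and Kp: "1 \<le> Kp" and M: "1 \<le> Mmax"
  shows "ln (ln (real N)) \<le> ln (real Mmax) + ln (1 + real n * ln (real Kp))"
proof -
  have lK: "0 \<le> ln (real Kp)" using Kp by simp
  have "ln (real N) \<le> ln (real Mmax * real Kp ^ (n * Mmax))"
    using Nb N by (intro ln_mono) (simp_all, metis of_nat_le_iff of_nat_mult of_nat_power)
  also have "\<dots> = ln (real Mmax) + real (n * Mmax) * ln (real Kp)"
    using M Kp by (simp add: ln_mult ln_realpow)
  also have "\<dots> \<le> real Mmax + real Mmax * (real n * ln (real Kp))"
  proof -
    have "ln (real Mmax) \<le> real Mmax" using M ln_le_minus_one[of "real Mmax"] by simp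
    then show ?thesis by (simp add: algebra_simps)
  qed
  also have "\<dots> = real Mmax * (1 + real n * ln (real Kp))" by (simp add: algebra_simps)
  finally have a: "ln (real N) \<le> real Mmax * (1 + real n * ln (real Kp))" .
  have lN: "0 < ln (real N)" using N by simp
  have "ln (ln (real N)) \<le> ln (real Mmax * (1 + real n * ln (real Kp)))"
    using a lN by (intro ln_mono) auto
  also have "\<dots> = ln (real Mmax) + ln (1 + real n * ln (real Kp))"
  proof -
    have "0 < 1 + real n * ln (real Kp)" using lK by (simp add: add_pos_nonneg)
    then show ?thesis using M by (simp add: ln_mult)
  qed
  finally show ?thesis .
qed

lemma sqrt_le_self': "1 \<le> (x::real) \<Longrightarrow> sqrt x \<le> x"
proof -
  assume x: "1 \<le> x"
  then have s1: "1 \<le> sqrt x" by simp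
  have "sqrt x * 1 \<le> sqrt x * sqrt x" using s1 by (intro mult_left_mono) auto
  also have "\<dots> = x" using x by simp
  finally show ?thesis by simp
qed

lemma asym_step:
  fixes n K :: nat and l Bq \<epsilon> :: real
  assumes n: "1 \<le> n" and l: "2 \<le> l" and Bq: "1 \<le> Bq" and e: "0 < \<epsilon>" "\<epsilon> \<le> 1"
    and K: "real K \<le> l / (\<epsilon> / (2 * sqrt (Bq + 1) * sqrt n))"
    and hl: "ln (ln l) < \<epsilon> * n" and hB: "ln (max 1 (ln Bq)) < \<epsilon> * n"
    and ha: "ln (1 + n * (ln 5 + ln (1 / \<epsilon>) + 2 + n)) \<le> \<epsilon> * n"
  shows "ln (1 + n * ln (real K + 1)) \<le> 2 * \<epsilon> * n"
proof -
  define E where "E = exp (\<epsilon> * n)"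
  have E1: "1 \<le> E" unfolding E_def using e by simp
  have np: "(1::real) \<le> n" using n by simp
  have sn: "sqrt (real n) \<le> n" using np by (intro sqrt_le_self') auto
  have sB: "sqrt (Bq + 1) \<le> Bq + 1" using Bq by (intro sqrt_le_self') auto
  have L4: "2 * sqrt (Bq + 1) \<le> 4 * Bq" using sB Bq by simp
  have "real K \<le> l * (2 * sqrt (Bq + 1)) * sqrt n / \<epsilon>" using K e by (simp add: field_simps)
  also have "\<dots> \<le> l * (4 * Bq) * n / \<epsilon>"
  proof -
    have a: "l * (2 * sqrt (Bq + 1)) \<le> l * (4 * Bq)" by (rule mult_left_mono[OF L4]) (use l in simp)
    have "l * (2 * sqrt (Bq + 1)) * sqrt n \<le> l * (4 * Bq) * n"
      by (rule mult_mono[OF a sn]) (use l Bq in auto)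
    then show ?thesis using e by (intro divide_right_mono) auto
  qed
  also have "l * (4 * Bq) * n / \<epsilon> = 4 * (l * Bq * n / \<epsilon>)" by simp
  finally have K2: "real K \<le> 4 * (l * Bq * n / \<epsilon>)" .
  have one: "1 \<le> l * Bq * n / \<epsilon>"
  proof -
    have lB: "1 * 1 \<le> l * Bq" using l Bq by (intro mult_mono) auto
    have "1 * 1 \<le> (l * Bq) * n" using lB np by (intro mult_mono) auto
    then have x1: "1 \<le> l * Bq * n" by simp
    have "(l * Bq * n) * \<epsilon> \<le> l * Bq * n" using x1 e by (intro mult_left_le) auto
    then have "l * Bq * n \<le> l * Bq * n / \<epsilon>" using e by (simp add: le_divide_eq)
    then show ?thesis using x1 by linarith
  qed
  have "real K + 1 \<le> 5 * (l * Bq * n / \<epsilon>)"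
  proof -
    define X where "X = l * Bq * n / \<epsilon>"
    have "real K \<le> 4 * X" "1 \<le> X" using K2 one unfolding X_def by simp_all
    then have "real K + 1 \<le> 5 * X" by linarith
    then show ?thesis unfolding X_def .
  qed
  then have "ln (real K + 1) \<le> ln (5 * (l * Bq * n / \<epsilon>))" by (intro ln_mono) auto
  also have "\<dots> = ln 5 + ln l + ln Bq + ln n + ln (1 / \<epsilon>)"
    using l Bq np e by (simp add: ln_mult ln_div)
  also have "\<dots> \<le> ln 5 + E + E + n + ln (1 / \<epsilon>)"
  proof -
    have lp: "0 < ln l" using l by simp
    have "ln l = exp (ln (ln l))" using lp by simp
    also have "\<dots> \<le> E" unfolding E_def using exp_less_mono[OF hl] by (rule less_imp_le)
    finally have a: "ln l \<le> E" .
    have "ln Bq \<le> max 1 (ln Bq)" by simp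
    also have "\<dots> = exp (ln (max 1 (ln Bq)))" by simp
    also have "\<dots> \<le> E" unfolding E_def using exp_less_mono[OF hB] by (rule less_imp_le)
    finally have b: "ln Bq \<le> E" .
    have c: "ln (real n) \<le> n" using np ln_le_minus_one[of "real n"] by simp
    show ?thesis using a b c by simp
  qed
  finally have Y: "ln (real K + 1) \<le> ln 5 + ln (1 / \<epsilon>) + 2 * E + n" by simp
  have Y0: "0 \<le> ln (real K + 1)" by simp
  have c0: "0 \<le> ln 5 + ln (1 / \<epsilon>)" using e by simp
  have "1 + n * ln (real K + 1) \<le> 1 + n * (ln 5 + ln (1 / \<epsilon>) + 2 * E + n)"
    using Y np by (intro add_left_mono mult_left_mono) auto
  also have "\<dots> \<le> (1 + n * (ln 5 + ln (1 / \<epsilon>) + 2 + n)) * E"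
  proof -
    have "ln 5 + ln (1 / \<epsilon>) + 2 * E + n \<le> (ln 5 + ln (1 / \<epsilon>) + 2 + n) * E"
    proof -
      have "ln 5 + ln (1 / \<epsilon>) \<le> (ln 5 + ln (1 / \<epsilon>)) * E" using E1 c0 by (simp add: mult_le_cancel_left1)
      moreover have "real n \<le> real n * E" using E1 np by (simp add: mult_le_cancel_left1)
      ultimately show ?thesis by (simp add: algebra_simps)
    qed
    then have "n * (ln 5 + ln (1 / \<epsilon>) + 2 * E + n) \<le> n * ((ln 5 + ln (1 / \<epsilon>) + 2 + n) * E)"
      by (intro mult_left_mono) auto
    then show ?thesis using E1 by (simp add: algebra_simps)
  qed
  finally have A: "1 + n * ln (real K + 1) \<le> (1 + n * (ln 5 + ln (1 / \<epsilon>) + 2 + n)) * E" .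
  have p1: "0 < 1 + n * ln (real K + 1)" using Y0 by (simp add: add_pos_nonneg)
  have p2: "0 < 1 + n * (ln 5 + ln (1 / \<epsilon>) + 2 + n)" using c0 by (simp add: add_pos_nonneg)
  have "ln (1 + n * ln (real K + 1)) \<le> ln ((1 + n * (ln 5 + ln (1 / \<epsilon>) + 2 + n)) * E)"
    using A p1 by (intro ln_mono) auto
  also have "\<dots> = ln (1 + n * (ln 5 + ln (1 / \<epsilon>) + 2 + n)) + \<epsilon> * n"
    using p2 unfolding E_def by (simp add: ln_mult)
  also have "\<dots> \<le> 2 * \<epsilon> * n" using ha by simp
  finally show ?thesis .
qed

lemma vd_to_avg:
  fixes M :: nat and \<kappa> :: real
  assumes gc: "general_channel Y W" and pP: "prob_space P0" and sP: "sets P0 = sets (Rn n)"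
    and M: "1 \<le> M" and \<phi>: "\<And>m. m \<in> {1..M} \<Longrightarrow> \<phi> m \<in> space (Rn n)"
    and vd: "var_dist Y n (P0 \<bind> W n) (measure_pmf (pmf_of_set {1..M}) \<bind> (\<lambda>m. W n (\<phi> m))) < 2 * \<kappa>"
    and k1: "\<kappa> < 1"
  shows "\<forall>B\<in>sets (Yn Y n). \<bar>measure (P0 \<bind> W n) B - (\<Sum>m\<in>{1..M}. measure (W n (\<phi> m)) B) / M\<bar> \<le> \<kappa>"
proof -
  let ?P1 = "P0 \<bind> W n"
  let ?P2 = "measure_pmf (pmf_of_set {1..M}) \<bind> (\<lambda>m. W n (\<phi> m))"
  note b = bindW[OF gc pP sP]
  interpret P1: prob_space ?P1 by (rule b(1))
  have Sne: "finite {1..M}" "{1..M} \<noteq> {}" using M by auto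
  have fK: "W n (\<phi> m) \<in> space (prob_algebra (Yn Y n))" if "m \<in> {1..M}" for m
    using W_prob[OF gc \<phi>[OF that]] by (simp add: space_prob_algebra)
  have m1: "measure ?P1 B \<le> 1" for B by (rule P1.prob_le_1)
  have vdS: "var_dist Y n ?P1 ?P2 = 2 * (SUP B \<in> sets (Yn Y n). \<bar>measure ?P1 B - measure ?P2 B\<bar>)"
    unfolding var_dist_def ..
  from pmf_bind_cases[OF Sne fK] show ?thesis
  proof
    assume avg: "\<forall>B\<in>sets (Yn Y n). measure ?P2 B = (\<Sum>m\<in>{1..M}. measure (W n (\<phi> m)) B) / card {1..M}"
    have avg1: "measure ?P2 B \<le> 1" if B: "B \<in> sets (Yn Y n)" for B
    proof -
      have "(\<Sum>m\<in>{1..M}. measure (W n (\<phi> m)) B) \<le> (\<Sum>m\<in>{1..M}. 1)"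
      proof (intro sum_mono)
        fix m assume "m \<in> {1..M}"
        then interpret prob_space "W n (\<phi> m)" using W_prob[OF gc \<phi>] by simp
        show "measure (W n (\<phi> m)) B \<le> 1" by (rule prob_le_1)
      qed
      then show ?thesis using avg B M by (simp add: divide_le_eq)
    qed
    have bdd: "bdd_above ((\<lambda>B. \<bar>measure ?P1 B - measure ?P2 B\<bar>) ` sets (Yn Y n))"
    proof (rule bdd_aboveI[of _ 2])
      fix y assume "y \<in> (\<lambda>B. \<bar>measure ?P1 B - measure ?P2 B\<bar>) ` sets (Yn Y n)"
      then obtain B where B: "B \<in> sets (Yn Y n)" and y: "y = \<bar>measure ?P1 B - measure ?P2 B\<bar>" by blast
      show "y \<le> 2" unfolding y using m1[of B] avg1[OF B] measure_nonneg[of ?P1 B] measure_nonneg[of ?P2 B]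
        by linarith
    qed
    show ?thesis
    proof
      fix B assume B: "B \<in> sets (Yn Y n)"
      have "\<bar>measure ?P1 B - measure ?P2 B\<bar> \<le> (SUP B \<in> sets (Yn Y n). \<bar>measure ?P1 B - measure ?P2 B\<bar>)"
        by (rule cSUP_upper[OF B bdd])
      also have "\<dots> < \<kappa>" using vd vdS by simp
      finally show "\<bar>measure ?P1 B - (\<Sum>m\<in>{1..M}. measure (W n (\<phi> m)) B) / M\<bar> \<le> \<kappa>"
        using avg B by simp
    qed
  next
    assume z: "\<forall>B. measure ?P2 B = 0"
    have bdd: "bdd_above ((\<lambda>B. \<bar>measure ?P1 B - measure ?P2 B\<bar>) ` sets (Yn Y n))"
    proof (rule bdd_aboveI[of _ 1])
      fix y assume "y \<in> (\<lambda>B. \<bar>measure ?P1 B - measure ?P2 B\<bar>) ` sets (Yn Y n)"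
      then obtain B where y: "y = \<bar>measure ?P1 B - measure ?P2 B\<bar>" by blast
      show "y \<le> 1" unfolding y using m1[of B] z measure_nonneg[of ?P1 B] by simp
    qed
    have sp: "space (Yn Y n) \<in> sets (Yn Y n)" by simp
    have "\<bar>measure ?P1 (space (Yn Y n)) - measure ?P2 (space (Yn Y n))\<bar>
        \<le> (SUP B \<in> sets (Yn Y n). \<bar>measure ?P1 B - measure ?P2 B\<bar>)"
      by (rule cSUP_upper[OF sp bdd])
    also have "\<dots> < \<kappa>" using vd vdS by simp
    finally have "\<bar>measure ?P1 (space (Yn Y n)) - 0\<bar> < \<kappa>" using z by simp
    moreover have "measure ?P1 (space (Yn Y n)) = 1" using b(3) P1.prob_space by simp
    ultimately show ?thesis using k1 by simp
  qed
qed

lemma good_eventually: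
  fixes N :: "nat \<Rightarrow> nat" and Q :: "nat \<Rightarrow> nat \<Rightarrow> (nat \<Rightarrow> real) measure" and \<epsilon> \<delta> R2 :: real
  assumes gc: "general_channel Y W"
    and codes: "\<And>n. n \<ge> 1 \<Longrightarrow> N n \<ge> 1 \<and> (\<forall>i\<in>{1..N n}. prob_space (Q n i) \<and> sets (Q n i) = sets (Rn n) \<and>
             Xcost c \<Gamma> n \<in> sets (Rn n) \<and> measure (Q n i) (Xcost c \<Gamma> n) = 1)"
    and res: "\<forall>PX\<in>input_processes c \<Gamma>. res_achievable_for Y W c \<delta> \<Gamma> R2 PX"
    and e: "0 < \<epsilon>" and de: "\<delta> + \<epsilon> < 2"
  shows "eventually (\<lambda>n. \<forall>i\<in>{1..N n}. \<exists>M \<phi>. 1 \<le> M \<and> (\<forall>m\<in>{1..M}. \<phi> m \<in> Xcost c \<Gamma> n) \<and>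
      ln (real M) / real n < R2 + \<epsilon> \<and>
      (\<forall>B\<in>sets (Yn Y n). \<bar>measure (Q n i \<bind> W n) B - (\<Sum>m\<in>{1..M}. measure (W n (\<phi> m)) B) / M\<bar> \<le> (\<delta> + \<epsilon>) / 2))
    sequentially"
proof -
  define good where "good n i \<longleftrightarrow> (\<exists>M \<phi>. 1 \<le> M \<and> (\<forall>m\<in>{1..M}. \<phi> m \<in> Xcost c \<Gamma> n) \<and>
      ln (real M) / real n < R2 + \<epsilon> \<and>
      (\<forall>B\<in>sets (Yn Y n). \<bar>measure (Q n i \<bind> W n) B - (\<Sum>m\<in>{1..M}. measure (W n (\<phi> m)) B) / M\<bar> \<le> (\<delta> + \<epsilon>) / 2))"
    for n i
  have "eventually (\<lambda>n. \<forall>i\<in>{1..N n}. good n i) sequentially"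
  proof (rule ccontr)
    assume "\<not> eventually (\<lambda>n. \<forall>i\<in>{1..N n}. good n i) sequentially"
    then have fr: "frequently (\<lambda>n. \<not> (\<forall>i\<in>{1..N n}. good n i)) sequentially"
      unfolding not_eventually .
    define bad where "bad n = (if \<exists>i\<in>{1..N n}. \<not> good n i then (SOME i. i\<in>{1..N n} \<and> \<not> good n i) else 1)" for n
    have bad1: "bad n \<in> {1..N n}" if n: "n \<ge> 1" for n
    proof (cases "\<exists>i\<in>{1..N n}. \<not> good n i")
      case True
      then have "\<exists>i. i\<in>{1..N n} \<and> \<not> good n i" by blast
      from someI_ex[OF this] show ?thesis unfolding bad_def using True by simp
    next
      case False then show ?thesis unfolding bad_def using codes[OF n] by simp
    qed
    have bad2: "\<not> good n (bad n)" if "\<not> (\<forall>i\<in>{1..N n}. good n i)" for n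
    proof -
      have T: "\<exists>i\<in>{1..N n}. \<not> good n i" using that by blast
      then have "\<exists>i. i\<in>{1..N n} \<and> \<not> good n i" by blast
      from someI_ex[OF this] show ?thesis unfolding bad_def using T by simp
    qed
    define PX where "PX n = Q n (bad n)" for n
    have PXin: "PX \<in> input_processes c \<Gamma>"
      unfolding input_processes_def PX_def using codes bad1 by blast
    obtain Mr \<phi>r where Mr: "\<forall>n\<ge>1. 1 \<le> Mr n \<and> (\<forall>m\<in>{1..Mr n}. \<phi>r n m \<in> Xcost c \<Gamma> n)"
      and lv: "limsup (\<lambda>n. ereal (var_dist Y n (PX n \<bind> W n)
          (measure_pmf (pmf_of_set {1..Mr n}) \<bind> (\<lambda>m. W n (\<phi>r n m))))) \<le> ereal \<delta>"
      and lr: "limsup (\<lambda>n. ereal (ln (real (Mr n)) / real n)) \<le> ereal R2"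
      using res PXin unfolding res_achievable_for_def by blast
    have "limsup (\<lambda>n. ereal (var_dist Y n (PX n \<bind> W n)
          (measure_pmf (pmf_of_set {1..Mr n}) \<bind> (\<lambda>m. W n (\<phi>r n m))))) < ereal (\<delta> + \<epsilon>)"
      by (rule le_less_trans[OF lv]) (use e in simp)
    from Limsup_lessD[OF this]
    have ev1: "eventually (\<lambda>n. var_dist Y n (PX n \<bind> W n)
          (measure_pmf (pmf_of_set {1..Mr n}) \<bind> (\<lambda>m. W n (\<phi>r n m))) < \<delta> + \<epsilon>) sequentially"
      by simp
    have "limsup (\<lambda>n. ereal (ln (real (Mr n)) / real n)) < ereal (R2 + \<epsilon>)"
      by (rule le_less_trans[OF lr]) (use e in simp)
    from Limsup_lessD[OF this]
    have ev2: "eventually (\<lambda>n. ln (real (Mr n)) / real n < R2 + \<epsilon>) sequentially" by simp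
    have ev3: "eventually (\<lambda>n. 1 \<le> n) sequentially" by (rule eventually_ge_at_top)
    have "frequently (\<lambda>n. \<not> (\<forall>i\<in>{1..N n}. good n i) \<and> ((var_dist Y n (PX n \<bind> W n)
          (measure_pmf (pmf_of_set {1..Mr n}) \<bind> (\<lambda>m. W n (\<phi>r n m))) < \<delta> + \<epsilon> \<and>
          ln (real (Mr n)) / real n < R2 + \<epsilon>) \<and> 1 \<le> n)) sequentially"
      by (rule frequently_eventually_frequently[OF fr eventually_conj[OF eventually_conj[OF ev1 ev2] ev3]])
    from frequently_ex[OF this] obtain n where nb: "\<not> (\<forall>i\<in>{1..N n}. good n i)"
      and vdn: "var_dist Y n (PX n \<bind> W n)
          (measure_pmf (pmf_of_set {1..Mr n}) \<bind> (\<lambda>m. W n (\<phi>r n m))) < \<delta> + \<epsilon>"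
      and rn: "ln (real (Mr n)) / real n < R2 + \<epsilon>" and n1: "1 \<le> n" by blast
    define i where "i = bad n"
    have i: "i \<in> {1..N n}" unfolding i_def using bad1[OF n1] .
    have ng: "\<not> good n i" unfolding i_def using bad2[OF nb] .
    have Mrn: "1 \<le> Mr n" "\<forall>m\<in>{1..Mr n}. \<phi>r n m \<in> Xcost c \<Gamma> n" using Mr n1 by auto
    have Q: "prob_space (Q n i)" "sets (Q n i) = sets (Rn n)" using codes[OF n1] i by auto
    have sp: "\<And>m. m \<in> {1..Mr n} \<Longrightarrow> \<phi>r n m \<in> space (Rn n)" using Mrn(2) unfolding Xcost_def by blast
    have "\<forall>B\<in>sets (Yn Y n). \<bar>measure (Q n i \<bind> W n) B - (\<Sum>m\<in>{1..Mr n}. measure (W n (\<phi>r n m)) B) / Mr n\<bar>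
        \<le> (\<delta> + \<epsilon>) / 2"
      by (rule vd_to_avg[OF gc Q Mrn(1) sp]) (use vdn de in \<open>auto simp: PX_def i_def\<close>)
    then have "good n i" unfolding good_def using Mrn rn by blast
    then show False using ng by blast
  qed
  then show ?thesis unfolding good_def .
qed

lemma asym_ev:
  fixes c e :: real assumes "e > 0" "c \<ge> 0"
  shows "eventually (\<lambda>n::nat. ln (1 + real n * (c + 2 + real n)) \<le> e * real n) at_top"
  using assms by real_asymp

lemma ereal_le_real_of:
  assumes "ereal q \<le> S" "S \<noteq> \<infinity>"
  shows "q \<le> real_of_ereal S"
  using assms by (cases S) auto

lemma core:
  fixes Y :: "'y measure" and W :: "nat \<Rightarrow> (nat \<Rightarrow> real) \<Rightarrow> (nat \<Rightarrow> 'y) measure"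
    and c :: "nat \<Rightarrow> (nat \<Rightarrow> real) \<Rightarrow> real" and \<Gamma> \<delta> \<mu> lm R1 R2 :: real
  assumes gc: "general_channel Y W" and A: "A1_A2 W c \<Gamma>"
    and d0: "\<delta> \<ge> 0" and m0: "\<mu> \<ge> 0" and l0: "lm \<ge> 0" and dlt: "\<delta> < 1 - \<mu> - lm"
    and id: "id_achievable Y W c \<mu> lm \<Gamma> R1"
    and res: "\<forall>PX\<in>input_processes c \<Gamma>. res_achievable_for Y W c \<delta> \<Gamma> R2 PX"
  shows "R1 \<le> R2"
proof (rule ccontr)
  assume "\<not> R1 \<le> R2"
  then have R: "R2 < R1" by simp
  obtain N Q Dec mu lam where
    cod: "\<forall>n\<ge>1. N n \<ge> 1 \<and>
         (\<forall>i\<in>{1..N n}. prob_space (Q n i) \<and> sets (Q n i) = sets (Rn n) \<and>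
             Xcost c \<Gamma> n \<in> sets (Rn n) \<and> measure (Q n i) (Xcost c \<Gamma> n) = 1 \<and>
             Dec n i \<in> sets (Yn Y n) \<and>
             QW W n (Q n i) (space (Yn Y n) - Dec n i) \<le> mu n) \<and>
         (\<forall>i\<in>{1..N n}. \<forall>j\<in>{1..N n}. i \<noteq> j \<longrightarrow> QW W n (Q n j) (Dec n i) \<le> lam n)"
    and lmu: "limsup (\<lambda>n. ereal (mu n)) \<le> ereal \<mu>"
    and llam: "limsup (\<lambda>n. ereal (lam n)) \<le> ereal lm"
    and lid: "liminf (idrate N) \<ge> ereal R1"
    using id unfolding id_achievable_def by blast
  obtain a l where
    A1: "\<forall>n\<ge>1. l n \<ge> 2 \<and> Xcost c \<Gamma> n \<subseteq> cube n (a n) (l n)"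
    and A1l: "limsup (\<lambda>n. ereal (ln (ln (l n)) / real n)) = 0"
    and A2a: "\<forall>n\<ge>1. \<forall>x \<in> cube n (a n) (l n).
          (\<exists>d>0. \<forall>v\<in>space (Rn n). enorm n (\<lambda>i. v i - x i) < d \<longrightarrow> KLW_finite W n x v) \<and>
          twice_differentiable_at n (KLW W n x) x"
    and A2b: "limsup (\<lambda>n. A2_term n (SUP x \<in> cube n (a n) (l n). ereal (quad_norm n (Fmat W n x)))) = 0"
    using A unfolding A1_A2_def by blast
  define \<gamma> where "\<gamma> = 1 - \<mu> - lm - \<delta>"
  define \<epsilon> where "\<epsilon> = min (\<gamma> / 6) (min ((R1 - R2) / 4) 1)"
  have gp: "0 < \<gamma>" unfolding \<gamma>_def using dlt by simp
  have ea: "\<epsilon> \<le> \<gamma> / 6" "\<epsilon> \<le> (R1 - R2) / 4" "\<epsilon> \<le> 1" unfolding \<epsilon>_def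
    by (rule min.cobounded1, rule order.trans[OF min.cobounded2 min.cobounded1],
        rule order.trans[OF min.cobounded2 min.cobounded2])
  have eb: "0 < \<epsilon>" unfolding \<epsilon>_def using gp R by auto
  have e: "0 < \<epsilon>" "\<epsilon> \<le> 1" "6 * \<epsilon> \<le> \<gamma>" "4 * \<epsilon> \<le> R1 - R2"
    using ea eb by (simp_all add: field_simps)
  have de: "\<delta> + \<epsilon> < 2" using e dlt m0 l0 unfolding \<gamma>_def by linarith
  define SUPn where "SUPn n = (SUP x \<in> cube n (a n) (l n). ereal (quad_norm n (Fmat W n x)))" for n
  have codes: "\<And>n. n \<ge> 1 \<Longrightarrow> N n \<ge> 1 \<and> (\<forall>i\<in>{1..N n}. prob_space (Q n i) \<and> sets (Q n i) = sets (Rn n) \<and>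
             Xcost c \<Gamma> n \<in> sets (Rn n) \<and> measure (Q n i) (Xcost c \<Gamma> n) = 1)"
    using cod by blast
  note ev_good = good_eventually[OF gc codes res e(1) de]
  have ev_mu: "eventually (\<lambda>n. mu n < \<mu> + \<epsilon>) sequentially"
  proof -
    have "limsup (\<lambda>n. ereal (mu n)) < ereal (\<mu> + \<epsilon>)"
      by (rule le_less_trans[OF lmu]) (use e in simp)
    from Limsup_lessD[OF this] show ?thesis by simp
  qed
  have ev_lam: "eventually (\<lambda>n. lam n < lm + \<epsilon>) sequentially"
  proof -
    have "limsup (\<lambda>n. ereal (lam n)) < ereal (lm + \<epsilon>)"
      by (rule le_less_trans[OF llam]) (use e in simp)
    from Limsup_lessD[OF this] show ?thesis by simp
  qed
  have ev_id: "eventually (\<lambda>n. ereal (R1 - \<epsilon>) < idrate N n) sequentially"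
  proof -
    have "ereal (R1 - \<epsilon>) < liminf (idrate N)"
      by (rule less_le_trans[OF _ lid]) (use e in simp)
    from less_LiminfD[OF this] show ?thesis .
  qed
  have ev_l: "eventually (\<lambda>n. ln (ln (l n)) / real n < \<epsilon>) sequentially"
  proof -
    have "limsup (\<lambda>n. ereal (ln (ln (l n)) / real n)) < ereal \<epsilon>" using A1l e by simp
    from Limsup_lessD[OF this] show ?thesis by simp
  qed
  have ev_A2: "eventually (\<lambda>n. A2_term n (SUPn n) < ereal \<epsilon>) sequentially"
  proof -
    have "limsup (\<lambda>n. A2_term n (SUPn n)) < ereal \<epsilon>" using A2b e unfolding SUPn_def by simp
    from Limsup_lessD[OF this] show ?thesis .
  qed
  have c0: "0 \<le> ln 5 + ln (1 / \<epsilon>)" using e by simp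
  have ev_as: "eventually (\<lambda>n. ln (1 + real n * ((ln 5 + ln (1 / \<epsilon>)) + 2 + real n)) \<le> \<epsilon> * real n) sequentially"
    by (rule asym_ev[OF e(1) c0])
  have ev_n: "eventually (\<lambda>n. 1 \<le> n) sequentially" by (rule eventually_ge_at_top)
  have "eventually (\<lambda>n. 
      (\<forall>i\<in>{1..N n}. \<exists>M \<phi>. 1 \<le> M \<and> (\<forall>m\<in>{1..M}. \<phi> m \<in> Xcost c \<Gamma> n) \<and>
      ln (real M) / real n < R2 + \<epsilon> \<and>
      (\<forall>B\<in>sets (Yn Y n). \<bar>measure (Q n i \<bind> W n) B - (\<Sum>m\<in>{1..M}. measure (W n (\<phi> m)) B) / M\<bar> \<le> (\<delta> + \<epsilon>) / 2))
      \<and> mu n < \<mu> + \<epsilon> \<and> lam n < lm + \<epsilon> \<and> ereal (R1 - \<epsilon>) < idrate N n \<and>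
      ln (ln (l n)) / real n < \<epsilon> \<and> A2_term n (SUPn n) < ereal \<epsilon> \<and>
      ln (1 + real n * ((ln 5 + ln (1 / \<epsilon>)) + 2 + real n)) \<le> \<epsilon> * real n \<and> 1 \<le> n) sequentially"
    by (intro eventually_conj ev_good ev_mu ev_lam ev_id ev_l ev_A2 ev_as ev_n)
  then obtain n0 where n0: "\<forall>n\<ge>n0. (\<forall>i\<in>{1..N n}. \<exists>M \<phi>. 1 \<le> M \<and> (\<forall>m\<in>{1..M}. \<phi> m \<in> Xcost c \<Gamma> n) \<and>
      ln (real M) / real n < R2 + \<epsilon> \<and>
      (\<forall>B\<in>sets (Yn Y n). \<bar>measure (Q n i \<bind> W n) B - (\<Sum>m\<in>{1..M}. measure (W n (\<phi> m)) B) / M\<bar> \<le> (\<delta> + \<epsilon>) / 2))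
      \<and> mu n < \<mu> + \<epsilon> \<and> lam n < lm + \<epsilon> \<and> ereal (R1 - \<epsilon>) < idrate N n \<and>
      ln (ln (l n)) / real n < \<epsilon> \<and> A2_term n (SUPn n) < ereal \<epsilon> \<and>
      ln (1 + real n * ((ln 5 + ln (1 / \<epsilon>)) + 2 + real n)) \<le> \<epsilon> * real n \<and> 1 \<le> n"
    unfolding eventually_sequentially by blast
  define n where "n = n0"
  have good: "\<forall>i\<in>{1..N n}. \<exists>M \<phi>. 1 \<le> M \<and> (\<forall>m\<in>{1..M}. \<phi> m \<in> Xcost c \<Gamma> n) \<and>
      ln (real M) / real n < R2 + \<epsilon> \<and>
      (\<forall>B\<in>sets (Yn Y n). \<bar>measure (Q n i \<bind> W n) B - (\<Sum>m\<in>{1..M}. measure (W n (\<phi> m)) B) / M\<bar> \<le> (\<delta> + \<epsilon>) / 2)"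
    and mun: "mu n < \<mu> + \<epsilon>" and lamn: "lam n < lm + \<epsilon>" and idn: "ereal (R1 - \<epsilon>) < idrate N n"
    and ln_l: "ln (ln (l n)) / real n < \<epsilon>" and a2n: "A2_term n (SUPn n) < ereal \<epsilon>"
    and asn: "ln (1 + real n * ((ln 5 + ln (1 / \<epsilon>)) + 2 + real n)) \<le> \<epsilon> * real n"
    and n1: "1 \<le> n"
    using n0 unfolding n_def by auto
  have np: "(0::real) < n" using n1 by simp
  have codn: "N n \<ge> 1"
    "\<And>i. i\<in>{1..N n} \<Longrightarrow> prob_space (Q n i) \<and> sets (Q n i) = sets (Rn n) \<and>
             Dec n i \<in> sets (Yn Y n) \<and> QW W n (Q n i) (space (Yn Y n) - Dec n i) \<le> mu n"
    "\<And>i j. i\<in>{1..N n} \<Longrightarrow> j\<in>{1..N n} \<Longrightarrow> i \<noteq> j \<Longrightarrow> QW W n (Q n j) (Dec n i) \<le> lam n"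
    using cod n1 by auto
  have ln2: "2 \<le> l n" and Xsub: "Xcost c \<Gamma> n \<subseteq> cube n (a n) (l n)" using A1 n1 by auto
  have Sfin: "SUPn n \<noteq> \<infinity>" using a2n unfolding A2_term_def by auto
  define Bq where "Bq = max 1 (real_of_ereal (SUPn n))"
  have Bq1: "1 \<le> Bq" unfolding Bq_def by simp
  have qy: "quad_norm n (Fmat W n y) \<le> Bq" if y: "y \<in> cube n (a n) (l n)" for y
  proof -
    have "ereal (quad_norm n (Fmat W n y)) \<le> SUPn n" unfolding SUPn_def using y by (rule SUP_upper)
    then have "quad_norm n (Fmat W n y) \<le> real_of_ereal (SUPn n)" using Sfin by (rule ereal_le_real_of)
    then show ?thesis unfolding Bq_def by simp
  qed
  have hB: "ln (max 1 (ln Bq)) < \<epsilon> * n"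
  proof -
    have "ln (max 1 (ln Bq)) / n < \<epsilon>" using a2n Sfin unfolding A2_term_def Bq_def by simp
    then show ?thesis using np by (simp add: divide_less_eq mult.commute)
  qed
  have hl: "ln (ln (l n)) < \<epsilon> * n" using ln_l np by (simp add: divide_less_eq mult.commute)
  define L where "L = 2 * sqrt (Bq + 1)"
  have Lp: "0 < L" unfolding L_def using Bq1 by simp
  have lip: "\<bar>measure (W n v) B - measure (W n x) B\<bar> \<le> L * enorm n (\<lambda>i. v i - x i)"
    if B: "B \<in> sets (Yn Y n)" and x: "x \<in> cube n (a n) (l n)" and v: "v \<in> cube n (a n) (l n)" for B x v
  proof (rule cube_lip[OF _ _ x v])
    show "0 \<le> L" using Lp by simp
    fix y assume y: "y \<in> cube n (a n) (l n)"
    have ys: "y \<in> space (Rn n)" using y unfolding cube_def by auto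
    have a2: "(\<exists>d>0. \<forall>v\<in>space (Rn n). enorm n (\<lambda>i. v i - y i) < d \<longrightarrow> KLW_finite W n y v)"
      "twice_differentiable_at n (KLW W n y) y" using A2a n1 y by auto
    show "\<exists>d>0. \<forall>v\<in>space (Rn n). enorm n (\<lambda>i. v i - y i) < d \<longrightarrow>
        \<bar>measure (W n v) B - measure (W n y) B\<bar> \<le> L * enorm n (\<lambda>i. v i - y i)"
      unfolding L_def by (rule local_lip[OF gc ys a2 qy[OF y] _ B]) (use Bq1 in simp)
  qed
  define \<eta> where "\<eta> = \<epsilon> / (L * sqrt n)"
  have \<eta>: "0 < \<eta>" unfolding \<eta>_def using e Lp np by simp
  have L\<eta>: "L * sqrt n * \<eta> = \<epsilon>" unfolding \<eta>_def using Lp np by simp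
  define \<kappa> where "\<kappa> = (\<delta> + \<epsilon>) / 2"
  define Mmax where "Mmax = nat \<lfloor>exp (real n * (R2 + \<epsilon>))\<rfloor>"
  define P where "P i B = measure (Q n i \<bind> W n) B" for i B
  have approx: "\<exists>M \<phi>. 1 \<le> M \<and> M \<le> Mmax \<and> (\<forall>m\<in>{1..M}. \<phi> m \<in> cube n (a n) (l n)) \<and>
        (\<forall>B\<in>sets (Yn Y n). \<bar>P i B - (\<Sum>m\<in>{1..M}. measure (W n (\<phi> m)) B) / M\<bar> \<le> \<kappa>)"
    if i: "i \<in> {1..N n}" for i
  proof -
    obtain M \<phi> where M: "1 \<le> M" and \<phi>: "\<forall>m\<in>{1..M}. \<phi> m \<in> Xcost c \<Gamma> n"
      and r: "ln (real M) / real n < R2 + \<epsilon>"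
      and b: "\<forall>B\<in>sets (Yn Y n). \<bar>measure (Q n i \<bind> W n) B - (\<Sum>m\<in>{1..M}. measure (W n (\<phi> m)) B) / M\<bar> \<le> (\<delta> + \<epsilon>) / 2"
      using good i by blast
    have "ln (real M) < real n * (R2 + \<epsilon>)" using r np by (simp add: divide_less_eq mult.commute)
    then have "exp (ln (real M)) < exp (real n * (R2 + \<epsilon>))" by (rule exp_less_mono)
    then have "real M < exp (real n * (R2 + \<epsilon>))" using M by simp
    then have "M \<le> Mmax" unfolding Mmax_def by (simp add: le_nat_floor less_imp_le)
    then show ?thesis using M \<phi> b Xsub unfolding P_def \<kappa>_def by blast
  qed
  have c1: "P i (Dec n i) \<ge> 1 - mu n" if i: "i \<in> {1..N n}" for i
  proof -
    have Qi: "prob_space (Q n i)" "sets (Q n i) = sets (Rn n)" using codn(2)[OF i] by auto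
    note b = bindW[OF gc Qi]
    have D: "Dec n i \<in> sets (Yn Y n)" using codn(2)[OF i] by blast
    have Dc: "space (Yn Y n) - Dec n i \<in> sets (Yn Y n)" using D by blast
    have "measure (Q n i \<bind> W n) (space (Yn Y n) - Dec n i) = 1 - measure (Q n i \<bind> W n) (Dec n i)"
      using prob_space.prob_compl[OF b(1), of "Dec n i"] b(2,3) D by simp
    moreover have "measure (Q n i \<bind> W n) (space (Yn Y n) - Dec n i) \<le> mu n"
      using b(4)[OF Dc] codn(2)[OF i] by simp
    ultimately show ?thesis unfolding P_def by simp
  qed
  have c2: "P j (Dec n i) \<le> lam n" if i: "i \<in> {1..N n}" and j: "j \<in> {1..N n}" and ne: "i \<noteq> j" for i j
  proof -
    have Qj: "prob_space (Q n j)" "sets (Q n j) = sets (Rn n)" using codn(2)[OF j] by auto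
    have D: "Dec n i \<in> sets (Yn Y n)" using codn(2)[OF i] by blast
    show ?thesis unfolding P_def using bindW(4)[OF gc Qj D] codn(3)[OF i j ne] by simp
  qed
  have sep: "2 * \<kappa> + 2 * (L * sqrt n * \<eta>) < 1 - mu n - lam n"
  proof -
    have k: "2 * \<kappa> + 2 * (L * sqrt n * \<eta>) = \<delta> + 3 * \<epsilon>" unfolding L\<eta> \<kappa>_def by simp
    have "\<delta> + 3 * \<epsilon> < 1 - mu n - lam n" using mun lamn e(1) e(3) unfolding \<gamma>_def by linarith
    then show ?thesis unfolding k .
  qed
  have Dsets: "\<And>i. i\<in>{1..N n} \<Longrightarrow> Dec n i \<in> sets (Yn Y n)" using codn(2) by blast
  have cnt: "N n \<le> Mmax * (nat \<lfloor>l n / \<eta>\<rfloor> + 1) ^ (n * Mmax)"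
  proof -
    have L0: "0 \<le> L" using Lp by simp
    have l0: "0 \<le> l n" using ln2 by simp
    show ?thesis
      by (rule count_core[where L=L and \<eta>=\<eta> and l="l n" and n=n and Y=Y and a="a n" and W=W and
          Dc="Dec n" and N="N n" and mu="mu n" and lam="lam n" and P=P and Mmax=Mmax and \<kappa>=\<kappa>,
          OF L0 \<eta> l0 lip Dsets c1 c2 approx sep])
  qed
  have N2: "2 \<le> N n"
  proof (rule ccontr)
    assume "\<not> 2 \<le> N n"
    then have "idrate N n = -\<infinity>" unfolding idrate_def by simp
    then show False using idn by simp
  qed
  have Mm1: "1 \<le> Mmax" using approx[of 1] codn(1) by auto
  define K where "K = nat \<lfloor>l n / \<eta>\<rfloor>"
  have lnln: "ln (ln (real (N n))) \<le> ln (real Mmax) + ln (1 + real n * ln (real (K + 1)))"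
    by (rule lnln_bound[OF N2 _ _ Mm1]) (use cnt in \<open>auto simp: K_def\<close>)
  have lnM: "ln (real Mmax) \<le> real n * (R2 + \<epsilon>)"
  proof -
    have "real Mmax \<le> exp (real n * (R2 + \<epsilon>))" unfolding Mmax_def by simp
    then have "ln (real Mmax) \<le> ln (exp (real n * (R2 + \<epsilon>)))" using Mm1 by (intro ln_mono) auto
    then show ?thesis by simp
  qed
  have Kb: "real K \<le> l n / (\<epsilon> / (2 * sqrt (Bq + 1) * sqrt n))"
  proof -
    have "0 \<le> l n / \<eta>" using ln2 \<eta> by simp
    then have "real K \<le> l n / \<eta>" unfolding K_def by simp
    then show ?thesis unfolding \<eta>_def L_def by simp
  qed
  have lK: "ln (1 + real n * ln (real K + 1)) \<le> 2 * \<epsilon> * n"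
    by (rule asym_step[OF n1 ln2 Bq1 e(1) e(2) Kb hl hB]) (use asn in \<open>simp add: add.assoc\<close>)
  have "ln (ln (real (N n))) \<le> real n * (R2 + \<epsilon>) + 2 * \<epsilon> * n"
  proof -
    have eqK: "ln (1 + real n * ln (real (K + 1))) = ln (1 + real n * ln (real K + 1))"
      by (simp add: add.commute)
    show ?thesis using lnln lnM lK eqK by linarith
  qed
  then have "ln (ln (real (N n))) / n \<le> R2 + 3 * \<epsilon>"
    using np by (simp add: divide_le_eq algebra_simps)
  moreover have "idrate N n = ereal (ln (ln (real (N n))) / real n)"
    unfolding idrate_def using N2 by simp
  ultimately have "R1 - \<epsilon> < R2 + 3 * \<epsilon>" using idn by simp
  then show False using e by simp
qed

theorem lemma6p2:
  fixes Y :: "'y measure"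
    and W :: "nat \<Rightarrow> (nat \<Rightarrow> real) \<Rightarrow> (nat \<Rightarrow> 'y) measure"
    and c :: "nat \<Rightarrow> (nat \<Rightarrow> real) \<Rightarrow> real"
    and \<Gamma> \<delta> \<mu> lm :: real
  assumes "general_channel Y W"
    and "A1_A2 W c \<Gamma>"
    and "\<delta> \<ge> 0" and "\<mu> \<ge> 0" and "lm \<ge> 0"
    and "\<delta> < 1 - \<mu> - lm"
  shows "ID_capacity Y W c \<mu> lm \<Gamma> \<le> Res_capacity Y W c \<delta> \<Gamma>"
  unfolding ID_capacity_def Res_capacity_def
proof (rule Sup_least)
  fix x assume "x \<in> {ereal R |R. id_achievable Y W c \<mu> lm \<Gamma> R}"
  then obtain R1 where x: "x = ereal R1" and id: "id_achievable Y W c \<mu> lm \<Gamma> R1" by blast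
  show "x \<le> Inf {ereal R |R. \<forall>PX\<in>input_processes c \<Gamma>. res_achievable_for Y W c \<delta> \<Gamma> R PX}"
  proof (rule Inf_greatest)
    fix y assume "y \<in> {ereal R |R. \<forall>PX\<in>input_processes c \<Gamma>. res_achievable_for Y W c \<delta> \<Gamma> R PX}"
    then obtain R2 where y: "y = ereal R2"
      and r: "\<forall>PX\<in>input_processes c \<Gamma>. res_achievable_for Y W c \<delta> \<Gamma> R2 PX" by blast
    have "R1 \<le> R2" by (rule core[OF assms id r])
    then show "x \<le> y" using x y by simp
  qed
qed

end
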